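(* Let $(X,\beta,m)$ be a non-atomic standard probability space and $\tau$ an ergodic invertible measure-preserving map of $X$. Let $L\ge1$ and $0<\gamma_L<\dots<\gamma_1<1$, and let $\eta>0$. Then there are measurable sets $U_1\supset U_2\supset\dots\supset U_L$ with $m(U_l)=\gamma_l$ for $1\le l\le L$ such that for every choice $e_l\in\{1,c\}$, $1\le l\le L$, $$\Big|\,m\Big(\bigcap_{l=1}^L\tau^{l-1}\big(U_l^{e_l}\big)\Big)-\prod_{l=1}^L m\big(U_l^{e_l}\big)\Big|\le\eta.$$
   Context: For a set $U$, $U^1=U$ and $U^c=X\setminus U$. *)

theory Defs
  imports "HOL-Probability.Probability"
begin

text \<open>A standard probability space: a probability measure on the Borel sigma-algebra
of a Polish space (every standard Borel space is isomorphic to such a space).\<close>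
definition standard_prob_space :: "'a::polish_space measure \<Rightarrow> bool" where
  "standard_prob_space M \<longleftrightarrow> prob_space M \<and> sets M = sets borel"

definition non_atomic :: "'a measure \<Rightarrow> bool" where
  "non_atomic M \<longleftrightarrow> (\<forall>A\<in>sets M. measure M A > 0 \<longrightarrow>
      (\<exists>B\<in>sets M. B \<subseteq> A \<and> 0 < measure M B \<and> measure M B < measure M A))"

definition measure_preserving_map :: "'a measure \<Rightarrow> ('a \<Rightarrow> 'a) \<Rightarrow> bool" where
  "measure_preserving_map M T \<longleftrightarrow> T \<in> measurable M M \<and> distr M M T = M"

definition invertible_mp_map :: "'a measure \<Rightarrow> ('a \<Rightarrow> 'a) \<Rightarrow> bool" where
  "invertible_mp_map M T \<longleftrightarrow> measure_preserving_map M T \<and>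
      bij_betw T (space M) (space M) \<and> the_inv_into (space M) T \<in> measurable M M"

definition ergodic_map :: "'a measure \<Rightarrow> ('a \<Rightarrow> 'a) \<Rightarrow> bool" where
  "ergodic_map M T \<longleftrightarrow> (\<forall>A\<in>sets M. T -` A \<inter> space M = A \<longrightarrow>
      measure M A = 0 \<or> measure M A = 1)"

text \<open>U^e with e = True meaning U^1 = U and e = False meaning U^c = X - U.\<close>
definition set_power :: "'a measure \<Rightarrow> 'a set \<Rightarrow> bool \<Rightarrow> 'a set" where
  "set_power M U e = (if e then U else space M - U)"

end

theory Submission
  imports Defs
begin


locale na_space = prob_space M for M :: "'a measure" +
  assumes na: "non_atomic M"
begin

lemma half_small:
  assumes A: "A \<in> sets M" "measure M A > 0"
  shows "\<exists>B\<in>sets M. B \<subseteq> A \<and> 0 < measure M B \<and> measure M B \<le> measure M A / 2"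
proof -
  obtain C where C: "C \<in> sets M" "C \<subseteq> A" "0 < measure M C" "measure M C < measure M A"
    using na A unfolding non_atomic_def by blast
  have d: "measure M (A - C) = measure M A - measure M C"
    using C A by (simp add: finite_measure_Diff)
  show ?thesis
  proof (cases "measure M C \<le> measure M A / 2")
    case True then show ?thesis using C by blast
  next
    case False
    then show ?thesis using C A d by (intro bexI[of _ "A - C"]) auto
  qed
qed

lemma small_subset_pow:
  assumes A: "A \<in> sets M" "measure M A > 0"
  shows "\<exists>B\<in>sets M. B \<subseteq> A \<and> 0 < measure M B \<and> measure M B \<le> measure M A / 2 ^ n"
proof (induction n)
  case 0 then show ?case using A by auto
next
  case (Suc n)
  then obtain B where B: "B\<in>sets M" "B \<subseteq> A" "0 < measure M B" "measure M B \<le> measure M A / 2 ^ n" by blast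
  then obtain C where C: "C\<in>sets M" "C \<subseteq> B" "0 < measure M C" "measure M C \<le> measure M B / 2"
    using half_small by blast
  have "measure M B / 2 \<le> measure M A / 2 ^ n / 2" using B(4) by (rule divide_right_mono) simp
  then have "measure M C \<le> measure M A / 2 ^ n / 2" using C(4) by linarith
  then have "measure M C \<le> measure M A / 2 ^ Suc n" by simp
  then show ?case using B C by blast
qed

lemma small_subset:
  assumes A: "A \<in> sets M" "measure M A > 0" and e: "e > 0"
  shows "\<exists>B\<in>sets M. B \<subseteq> A \<and> 0 < measure M B \<and> measure M B \<le> e"
proof -
  obtain n where n: "(1/2::real) ^ n < e" using real_arch_pow_inv[OF e, of "1/2"] by auto
  obtain B where B: "B\<in>sets M" "B \<subseteq> A" "0 < measure M B" "measure M B \<le> measure M A / 2 ^ n"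
    using small_subset_pow[OF A] by blast
  have h: "(1/2::real)^n = 1/2^n" by (simp add: power_one_over)
  have "measure M A / 2 ^ n \<le> 1 / 2 ^ n" by (rule divide_right_mono) auto
  then have "measure M B < e" using B(4) n h by linarith
  then show ?thesis using B(1,2,3) by (intro bexI[of _ B]) auto
qed

definition supv :: "'a set \<Rightarrow> 'a set \<Rightarrow> real \<Rightarrow> real" where
  "supv A S t = Sup {measure M C | C. C \<in> sets M \<and> C \<subseteq> A - S \<and> measure M C \<le> t - measure M S}"

lemma supv_props:
  assumes "measure M S \<le> t"
  shows "\<exists>C. C \<in> sets M \<and> C \<subseteq> A - S \<and> measure M C \<le> t - measure M S \<and> supv A S t / 2 \<le> measure M C"
    and "\<And>C. C \<in> sets M \<Longrightarrow> C \<subseteq> A - S \<Longrightarrow> measure M C \<le> t - measure M S \<Longrightarrow> measure M C \<le> supv A S t"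
proof -
  let ?X = "{measure M C | C. C \<in> sets M \<and> C \<subseteq> A - S \<and> measure M C \<le> t - measure M S}"
  have ne: "?X \<noteq> {}" using assms by (auto intro!: exI[of _ "{}"])
  have bdd: "bdd_above ?X" by (auto intro!: bdd_aboveI[of _ 1])
  show u: "\<And>C. C \<in> sets M \<Longrightarrow> C \<subseteq> A - S \<Longrightarrow> measure M C \<le> t - measure M S \<Longrightarrow> measure M C \<le> supv A S t"
    unfolding supv_def by (rule cSup_upper[OF _ bdd]) auto
  have z: "0 \<le> supv A S t" using u[of "{}"] assms by simp
  show "\<exists>C. C \<in> sets M \<and> C \<subseteq> A - S \<and> measure M C \<le> t - measure M S \<and> supv A S t / 2 \<le> measure M C"
  proof (cases "supv A S t > 0")
    case True
    then have "supv A S t / 2 < Sup ?X" unfolding supv_def by simp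
    then obtain x where "x \<in> ?X" "supv A S t / 2 < x" using less_cSup_iff[OF ne bdd] by blast
    then show ?thesis by force
  next
    case False then show ?thesis using assms z by (intro exI[of _ "{}"]) auto
  qed
qed

definition stepC :: "'a set \<Rightarrow> real \<Rightarrow> 'a set \<Rightarrow> 'a set" where
  "stepC A t S = (SOME C. C \<in> sets M \<and> C \<subseteq> A - S \<and> measure M C \<le> t - measure M S \<and> supv A S t / 2 \<le> measure M C)"

lemma stepC:
  assumes "measure M S \<le> t"
  shows "stepC A t S \<in> sets M \<and> stepC A t S \<subseteq> A - S \<and> measure M (stepC A t S) \<le> t - measure M S \<and> supv A S t / 2 \<le> measure M (stepC A t S)"
  unfolding stepC_def by (rule someI_ex[OF supv_props(1)[OF assms]])

fun seqS :: "'a set \<Rightarrow> real \<Rightarrow> nat \<Rightarrow> 'a set" where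
  "seqS A t 0 = {}"
| "seqS A t (Suc n) = seqS A t n \<union> stepC A t (seqS A t n)"

lemma sierpinski:
  assumes A: "A \<in> sets M" and t: "0 \<le> t" "t \<le> measure M A"
  shows "\<exists>B\<in>sets M. B \<subseteq> A \<and> measure M B = t"
proof -
  define S where "S = seqS A t"
  define C where "C n = stepC A t (S n)" for n
  have inv: "S n \<in> sets M \<and> S n \<subseteq> A \<and> measure M (S n) \<le> t" for n
  proof (induction n)
    case 0 then show ?case using t by (simp add: S_def)
  next
    case (Suc n)
    have c: "C n \<in> sets M \<and> C n \<subseteq> A - S n \<and> measure M (C n) \<le> t - measure M (S n)"
      using stepC[of "S n" t A] Suc by (simp add: C_def)
    have "measure M (S n \<union> C n) = measure M (S n) + measure M (C n)"
      using c Suc by (intro finite_measure_Union) auto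
    moreover have "S (Suc n) = S n \<union> C n" by (simp add: S_def C_def)
    ultimately show ?case using c Suc by auto
  qed
  have Cp: "C n \<in> sets M" "C n \<subseteq> A - S n" "supv A (S n) t / 2 \<le> measure M (C n)" for n
    using stepC[of "S n" t A] inv[of n] by (auto simp: C_def)
  have Sadd: "measure M (S (Suc n)) = measure M (S n) + measure M (C n)" for n
  proof -
    have "S (Suc n) = S n \<union> C n" by (simp add: S_def C_def)
    moreover have "measure M (S n \<union> C n) = measure M (S n) + measure M (C n)"
      using Cp[of n] inv[of n] by (intro finite_measure_Union) auto
    ultimately show ?thesis by simp
  qed
  have inc: "incseq S" by (rule incseq_SucI) (simp add: S_def)
  define B where "B = (\<Union>n. S n)"
  have Bs: "B \<in> sets M" "B \<subseteq> A" using inv by (auto simp: B_def)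
  have lim: "(\<lambda>n. measure M (S n)) \<longlonglongrightarrow> measure M B"
    unfolding B_def using inv inc by (intro finite_Lim_measure_incseq) auto
  have Bt: "measure M B \<le> t" using inv by (intro LIMSEQ_le_const2[OF lim]) auto
  have limC: "(\<lambda>n. measure M (C n)) \<longlonglongrightarrow> 0"
  proof -
    have "(\<lambda>n. measure M (S (Suc n)) - measure M (S n)) \<longlonglongrightarrow> measure M B - measure M B"
      by (intro tendsto_diff LIMSEQ_Suc lim)
    then show ?thesis using Sadd by simp
  qed
  show ?thesis
  proof (cases "measure M B = t")
    case True then show ?thesis using Bs by blast
  next
    case False
    then have lt: "measure M B < t" using Bt by simp
    have "measure M (A - B) = measure M A - measure M B" using Bs A by (simp add: finite_measure_Diff)
    then have pos: "measure M (A - B) > 0" using lt t by simp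
    obtain D where D: "D \<in> sets M" "D \<subseteq> A - B" "0 < measure M D" "measure M D \<le> t - measure M B"
      using small_subset[OF _ pos, of "t - measure M B"] A Bs lt by auto
    have "measure M D \<le> supv A (S n) t" for n
    proof (rule supv_props(2))
      show "measure M (S n) \<le> t" using inv by auto
      show "D \<in> sets M" by fact
      show "D \<subseteq> A - S n" using D(2) by (auto simp: B_def)
      have "measure M (S n) \<le> measure M B" using Bs inv[of n] by (intro finite_measure_mono) (auto simp: B_def)
      then show "measure M D \<le> t - measure M (S n)" using D by simp
    qed
    then have ge: "measure M D / 2 \<le> measure M (C n)" for n
    proof -
      have "measure M D / 2 \<le> supv A (S n) t / 2" using \<open>\<And>n. measure M D \<le> supv A (S n) t\<close>[of n] by (rule divide_right_mono) simp
      then show ?thesis using Cp(3)[of n] by linarith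
    qed
    have "eventually (\<lambda>n. measure M (C n) < measure M D / 2) sequentially"
      using limC D(3) by (intro order_tendstoD(2)) auto
    then obtain n where "measure M (C n) < measure M D / 2" by (auto simp: eventually_sequentially)
    then show ?thesis using ge[of n] by simp
  qed
qed

end


definition EE :: "'i set \<Rightarrow> nat \<Rightarrow> (nat \<Rightarrow> real) \<Rightarrow> (('i \<Rightarrow> nat) \<Rightarrow> real) \<Rightarrow> real" where
  "EE I L p G = (\<Sum>z\<in>PiE I (\<lambda>_. {0..L}). (\<Prod>i\<in>I. p (z i)) * G z)"

lemma EE_prod:
  fixes h :: "'j \<Rightarrow> nat \<Rightarrow> real" and g :: "'j \<Rightarrow> 'i"
  assumes finI: "finite I" and finJ: "finite J" and inj: "inj_on g J" and gJ: "g ` J \<subseteq> I"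
    and p1: "(\<Sum>v\<in>{0..L}. p v) = 1"
  shows "EE I L p (\<lambda>z. \<Prod>j\<in>J. h j (z (g j))) = (\<Prod>j\<in>J. \<Sum>v\<in>{0..L}. p v * h j v)"
proof -
  define H where "H i v = (if i \<in> g ` J then h (inv_into J g i) v else 1)" for i v
  have e1: "(\<Prod>j\<in>J. h j (z (g j))) = (\<Prod>i\<in>I. H i (z i))" for z :: "'i \<Rightarrow> nat"
  proof -
    have "(\<Prod>i\<in>I. H i (z i)) = (\<Prod>i\<in>g ` J. H i (z i))"
      using gJ finI by (intro prod.mono_neutral_right) (auto simp: H_def)
    also have "\<dots> = (\<Prod>j\<in>J. H (g j) (z (g j)))" using inj by (simp add: prod.reindex)
    also have "\<dots> = (\<Prod>j\<in>J. h j (z (g j)))" using inj by (intro prod.cong) (auto simp: H_def)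
    finally show ?thesis by simp
  qed
  have "EE I L p (\<lambda>z. \<Prod>j\<in>J. h j (z (g j))) = (\<Sum>z\<in>PiE I (\<lambda>_. {0..L}). \<Prod>i\<in>I. p (z i) * H i (z i))"
    unfolding EE_def e1 by (simp add: prod.distrib)
  also have "\<dots> = (\<Prod>i\<in>I. \<Sum>v\<in>{0..L}. p v * H i v)"
    using finI by (rule prod_sum_PiE[symmetric]) auto
  also have "\<dots> = (\<Prod>i\<in>g ` J. \<Sum>v\<in>{0..L}. p v * H i v)"
    using gJ finI p1 by (intro prod.mono_neutral_left[symmetric]) (auto simp: H_def)
  also have "\<dots> = (\<Prod>j\<in>J. \<Sum>v\<in>{0..L}. p v * H (g j) v)" using inj by (simp add: prod.reindex)
  also have "\<dots> = (\<Prod>j\<in>J. \<Sum>v\<in>{0..L}. p v * h j v)" using inj by (intro prod.cong sum.cong) (auto simp: H_def)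
  finally show ?thesis .
qed

lemma EE_one:
  assumes "finite I" "(\<Sum>v\<in>{0..L}. p v) = 1"
  shows "EE I L p (\<lambda>_. 1) = 1"
  using EE_prod[where J="{}" and g="\<lambda>_. undefined", OF assms(1) _ _ _ assms(2)] by simp

lemma EE_lin: "EE I L p (\<lambda>z. a * F z + b * G z) = a * EE I L p F + b * EE I L p G"
  unfolding EE_def by (simp add: algebra_simps sum.distrib sum_distrib_left)

lemma EE_sum: "finite S \<Longrightarrow> EE I L p (\<lambda>z. \<Sum>s\<in>S. F s z) = (\<Sum>s\<in>S. EE I L p (F s))"
  unfolding EE_def by (simp add: sum_distrib_left sum.swap[of _ S])

lemma EE_cmult: "EE I L p (\<lambda>z. a * F z) = a * EE I L p F"
  unfolding EE_def by (simp add: algebra_simps sum_distrib_left)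

lemma EE_mono:
  assumes "\<And>i v. p v \<ge> 0" "\<And>z. z \<in> PiE I (\<lambda>_. {0..L}) \<Longrightarrow> F z \<le> G z"
  shows "EE I L p F \<le> EE I L p G"
  unfolding EE_def using assms by (intro sum_mono mult_left_mono prod_nonneg) auto

lemma EE_exists:
  assumes finI: "finite I" and p1: "(\<Sum>v\<in>{0..L}. p v) = 1" and p0: "\<And>v. p v \<ge> 0"
  shows "\<exists>z\<in>PiE I (\<lambda>_. {0..L}). F z \<le> EE I L p F"
proof (rule ccontr)
  define c where "c = EE I L p F"
  assume "\<not> ?thesis"
  then have lt: "\<And>z. z \<in> PiE I (\<lambda>_. {0..L}) \<Longrightarrow> c < F z" by (auto simp: c_def)
  have "EE I L p (\<lambda>z. 1 * F z + (- c) * 1) = 0"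
    unfolding EE_lin EE_one[OF finI p1] by (simp add: c_def)
  moreover have "\<exists>z\<in>PiE I (\<lambda>_. {0..L}). (\<Prod>i\<in>I. p (z i)) > 0"
  proof (rule ccontr)
    assume "\<not> ?thesis"
    then have "\<And>z. z \<in> PiE I (\<lambda>_. {0..L}) \<Longrightarrow> (\<Prod>i\<in>I. p (z i)) = 0"
      using p0 by (metis less_eq_real_def prod_nonneg)
    then have "EE I L p (\<lambda>_. 1) = 0" unfolding EE_def by simp
    then show False using EE_one[OF finI p1] by simp
  qed
  then obtain z0 where l0: "z0 \<in> PiE I (\<lambda>_. {0..L})" "(\<Prod>i\<in>I. p (z0 i)) > 0" by blast
  have "0 < EE I L p (\<lambda>z. 1 * F z + (- c) * 1)" unfolding EE_def
  proof (rule sum_pos2[OF _ l0(1)])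
    show "finite (PiE I (\<lambda>_. {0..L::nat}))" using finI by (simp add: finite_PiE)
    show "0 < (\<Prod>i\<in>I. p (z0 i)) * (1 * F z0 + - c * 1)" using l0 lt[OF l0(1)] by simp
    fix z assume z: "z \<in> PiE I (\<lambda>_. {0..L})"
    have "0 \<le> F z - c" using lt[OF z] by simp
    then show "0 \<le> (\<Prod>i\<in>I. p (z i)) * (1 * F z + - c * 1)" using p0 by (simp add: prod_nonneg)
  qed
  ultimately show False by simp
qed


lemma EE_expand:
  "EE I L p (\<lambda>z. (A z - q) * (B z - q)) = EE I L p (\<lambda>z. A z * B z) - q * EE I L p A - q * EE I L p B + q * q * EE I L p (\<lambda>_. 1)"
  unfolding EE_def by (simp add: algebra_simps sum.distrib sum_subtractf sum_distrib_left)

definition Phi :: "(nat \<Rightarrow> nat set) \<Rightarrow> ('i \<Rightarrow> nat) \<Rightarrow> nat \<Rightarrow> (nat \<Rightarrow> 'i) \<Rightarrow> real" where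
  "Phi Q z L t = (\<Prod>l\<in>{1..L}. of_bool (z (t l) \<in> Q l))"

definition qQ :: "(nat \<Rightarrow> real) \<Rightarrow> nat \<Rightarrow> (nat \<Rightarrow> nat set) \<Rightarrow> real" where
  "qQ p L Q = (\<Prod>l\<in>{1..L}. \<Sum>v\<in>{0..L}. p v * of_bool (v \<in> Q l))"

lemma Phi_01: "0 \<le> Phi Q z L t" "Phi Q z L t \<le> 1"
  unfolding Phi_def by (auto intro: prod_nonneg prod_le_1)

lemma qQ_01:
  assumes p1: "(\<Sum>v\<in>{0..L}. p v) = 1" and p0: "\<And>v. p v \<ge> 0"
  shows "0 \<le> qQ p L Q" "qQ p L Q \<le> 1"
proof -
  have f0: "0 \<le> (\<Sum>v\<in>{0..L}. p v * of_bool (v \<in> Q l))" for l using p0 by (auto intro: sum_nonneg)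
  have f1: "(\<Sum>v\<in>{0..L}. p v * of_bool (v \<in> Q l)) \<le> 1" for l
  proof -
    have "(\<Sum>v\<in>{0..L}. p v * of_bool (v \<in> Q l)) \<le> (\<Sum>v\<in>{0..L}. p v)"
      using p0 by (intro sum_mono) auto
    then show ?thesis using p1 by simp
  qed
  show "0 \<le> qQ p L Q" unfolding qQ_def using f0 by (intro prod_nonneg) auto
  show "qQ p L Q \<le> 1" unfolding qQ_def using f0 f1 by (intro prod_le_1) auto
qed

lemma EE_Phi:
  assumes finI: "finite I" and p1: "(\<Sum>v\<in>{0..L}. p v) = 1"
    and t: "t \<in> PiE {1..L} (\<lambda>_. I)" and inj: "inj_on t {1..L}"
  shows "EE I L p (\<lambda>z. Phi Q z L t) = qQ p L Q"
proof -
  have tI: "t ` {1..L} \<subseteq> I" using t by (auto simp: PiE_def Pi_def)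
  have "EE I L p (\<lambda>z. \<Prod>l\<in>{1..L}. of_bool (z (t l) \<in> Q l)) = (\<Prod>l\<in>{1..L}. \<Sum>v\<in>{0..L}. p v * of_bool (v \<in> Q l))"
    by (rule EE_prod[OF finI finite_atLeastAtMost inj tI p1])
  then show ?thesis by (simp add: Phi_def qQ_def)
qed

lemma EE_Phi2:
  assumes finI: "finite I" and p1: "(\<Sum>v\<in>{0..L}. p v) = 1"
    and t: "t \<in> PiE {1..L} (\<lambda>_. I)" and inj: "inj_on t {1..L}"
    and t': "t' \<in> PiE {1..L} (\<lambda>_. I)" and inj': "inj_on t' {1..L}"
    and disj: "t ` {1..L} \<inter> t' ` {1..L} = {}"
  shows "EE I L p (\<lambda>z. Phi Q z L t * Phi Q z L t') = qQ p L Q * qQ p L Q"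
proof -
  define g where "g = case_sum t t'"
  define h :: "nat + nat \<Rightarrow> nat \<Rightarrow> real" where "h = case_sum (\<lambda>l v. of_bool (v \<in> Q l)) (\<lambda>l v. of_bool (v \<in> Q l))"
  have ginj: "inj_on g ({1..L} <+> {1..L})"
  proof (rule inj_onI)
    fix x y assume x: "x \<in> {1..L} <+> {1..L}" and y: "y \<in> {1..L} <+> {1..L}" and e: "g x = g y"
    show "x = y"
    proof (cases x)
      case (Inl a)
      then have a: "a \<in> {1..L}" using x by auto
      show ?thesis
      proof (cases y)
        case (Inl b)
        then have "b \<in> {1..L}" using y by auto
        then show ?thesis using a e Inl \<open>x = Inl a\<close> inj by (simp add: g_def inj_on_eq_iff)
      next
        case (Inr b)
        then have b: "b \<in> {1..L}" using y by auto
        have "t a = t' b" using e Inr \<open>x = Inl a\<close> by (simp add: g_def)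
        then have "t a \<in> t ` {1..L} \<inter> t' ` {1..L}" using a b by (metis IntI imageI)
        then show ?thesis using disj by blast
      qed
    next
      case (Inr a)
      then have a: "a \<in> {1..L}" using x by auto
      show ?thesis
      proof (cases y)
        case (Inl b)
        then have b: "b \<in> {1..L}" using y by auto
        have "t b = t' a" using e Inl \<open>x = Inr a\<close> by (simp add: g_def)
        then have "t b \<in> t ` {1..L} \<inter> t' ` {1..L}" using a b by (metis IntI imageI)
        then show ?thesis using disj by blast
      next
        case (Inr b)
        then have "b \<in> {1..L}" using y by auto
        then show ?thesis using a e Inr \<open>x = Inr a\<close> inj' by (simp add: g_def inj_on_eq_iff)
      qed
    qed
  qed
  have gI: "g ` ({1..L} <+> {1..L}) \<subseteq> I" using t t' by (auto simp: g_def)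
  have "(\<lambda>z. Phi Q z L t * Phi Q z L t') = (\<lambda>z. \<Prod>j\<in>{1..L} <+> {1..L}. h j (z (g j)))"
    by (simp add: Phi_def prod.Plus g_def h_def o_def)
  moreover have "(\<Prod>j\<in>{1..L} <+> {1..L}. \<Sum>v\<in>{0..L}. p v * h j v) = qQ p L Q * qQ p L Q"
    by (simp add: qQ_def prod.Plus h_def o_def)
  ultimately show ?thesis using EE_prod[OF finI _ ginj gI p1, of h] by simp
qed

definition XX :: "(nat \<Rightarrow> 'i) set \<Rightarrow> ((nat \<Rightarrow> 'i) \<Rightarrow> real) \<Rightarrow> (nat \<Rightarrow> nat set) \<Rightarrow> nat \<Rightarrow> ('i \<Rightarrow> nat) \<Rightarrow> real" where
  "XX T w Q L z = (\<Sum>t\<in>T. w t * Phi Q z L t)"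

lemma sum_swap4:
  "(\<Sum>t\<in>T. \<Sum>t'\<in>T'. \<Sum>l\<in>Ls. \<Sum>l'\<in>Ls'. g t t' l l') = (\<Sum>l\<in>Ls. \<Sum>l'\<in>Ls'. \<Sum>t\<in>T. \<Sum>t'\<in>T'. g t t' l l')"
proof -
  have "(\<Sum>t\<in>T. \<Sum>t'\<in>T'. \<Sum>l\<in>Ls. \<Sum>l'\<in>Ls'. g t t' l l') = (\<Sum>t\<in>T. \<Sum>l\<in>Ls. \<Sum>t'\<in>T'. \<Sum>l'\<in>Ls'. g t t' l l')"
    by (rule sum.cong[OF refl], rule sum.swap)
  also have "\<dots> = (\<Sum>t\<in>T. \<Sum>l\<in>Ls. \<Sum>l'\<in>Ls'. \<Sum>t'\<in>T'. g t t' l l')"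
    by (rule sum.cong[OF refl], rule sum.cong[OF refl], rule sum.swap)
  also have "\<dots> = (\<Sum>l\<in>Ls. \<Sum>t\<in>T. \<Sum>l'\<in>Ls'. \<Sum>t'\<in>T'. g t t' l l')"
    by (rule sum.swap)
  also have "\<dots> = (\<Sum>l\<in>Ls. \<Sum>l'\<in>Ls'. \<Sum>t\<in>T. \<Sum>t'\<in>T'. g t t' l l')"
    by (rule sum.cong[OF refl], rule sum.swap)
  finally show ?thesis .
qed

lemma var_bound:
  fixes w :: "(nat \<Rightarrow> 'i) \<Rightarrow> real" and a :: "'i \<Rightarrow> real" and I :: "'i set"
  assumes finI: "finite I" and p1: "(\<Sum>v\<in>{0..L}. p v) = 1" and p0: "\<And>v. p v \<ge> 0"
    and T: "T = PiE {1..L} (\<lambda>_. I)"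
    and w0: "\<And>t. w t \<ge> 0" and w1: "sum w T = 1"
    and wa: "\<And>l i. l \<in> {1..L} \<Longrightarrow> i \<in> I \<Longrightarrow> sum w {t\<in>T. t l = i} = a i"
    and a0: "\<And>i. a i \<ge> 0" and a1: "sum a I = 1" and ad: "\<And>i. i \<in> I \<Longrightarrow> a i \<le> \<delta>"
    and bad: "sum w {t\<in>T. \<not> inj_on t {1..L}} \<le> \<epsilon>"
  shows "EE I L p (\<lambda>z. (XX T w Q L z - qQ p L Q)\<^sup>2) \<le> 2 * \<epsilon> + real L ^ 2 * \<delta>"
proof -
  define q where "q = qQ p L Q"
  define Ph :: "(nat \<Rightarrow> 'i) \<Rightarrow> ('i \<Rightarrow> nat) \<Rightarrow> real" where "Ph t z = Phi Q z L t" for t z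
  have finT: "finite T" unfolding T using finI by (simp add: finite_PiE)
  have q01: "0 \<le> q" "q \<le> 1" using qQ_01[OF p1 p0] by (auto simp: q_def)
  have sq: "(XX T w Q L z - q)\<^sup>2 = (\<Sum>t\<in>T. \<Sum>t'\<in>T. w t * w t' * ((Ph t z - q) * (Ph t' z - q)))" for z
  proof -
    have "XX T w Q L z - q = (\<Sum>t\<in>T. w t * (Ph t z - q))"
    proof -
      have "(\<Sum>t\<in>T. q * w t) = q" using w1 by (simp add: sum_distrib_left[symmetric])
      then show ?thesis unfolding XX_def Ph_def by (simp add: algebra_simps sum_subtractf)
    qed
    then have "(XX T w Q L z - q)\<^sup>2 = (\<Sum>t\<in>T. w t * (Ph t z - q)) * (\<Sum>t'\<in>T. w t' * (Ph t' z - q))"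
      by (simp add: power2_eq_square)
    also have "\<dots> = (\<Sum>t\<in>T. \<Sum>t'\<in>T. w t * (Ph t z - q) * (w t' * (Ph t' z - q)))"
      by (rule sum_product)
    finally show ?thesis by (simp add: algebra_simps)
  qed
  define D :: "(nat \<Rightarrow> 'i) \<Rightarrow> (nat \<Rightarrow> 'i) \<Rightarrow> real" where "D t t' = EE I L p (\<lambda>z. (Ph t z - q) * (Ph t' z - q))" for t t'
  have E1: "EE I L p (\<lambda>z. (XX T w Q L z - q)\<^sup>2) = (\<Sum>t\<in>T. \<Sum>t'\<in>T. w t * w t' * D t t')"
    unfolding sq D_def using finT by (simp add: EE_sum EE_cmult)
  define Bd :: "(nat \<Rightarrow> 'i) \<Rightarrow> (nat \<Rightarrow> 'i) \<Rightarrow> real" where "Bd t t' = of_bool (\<not> inj_on t {1..L}) + of_bool (\<not> inj_on t' {1..L})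
     + (\<Sum>l\<in>{1..L}. \<Sum>l'\<in>{1..L}. of_bool (t l = t' l'))" for t t'
  have Bd0: "0 \<le> Bd t t'" for t t' unfolding Bd_def by (auto intro!: sum_nonneg add_nonneg_nonneg)
  have D1: "D t t' \<le> 1" for t t'
  proof -
    have "D t t' \<le> EE I L p (\<lambda>_. 1)" unfolding D_def
    proof (rule EE_mono[OF p0])
      fix z :: "'i \<Rightarrow> nat"
      have "\<bar>Ph t z - q\<bar> \<le> 1" "\<bar>Ph t' z - q\<bar> \<le> 1"
        using Phi_01[of Q z L t] Phi_01[of Q z L t'] q01 by (auto simp: Ph_def abs_le_iff)
      then have "\<bar>(Ph t z - q) * (Ph t' z - q)\<bar> \<le> 1" by (simp add: abs_mult mult_le_one)
      then show "(Ph t z - q) * (Ph t' z - q) \<le> 1" by simp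
    qed
    then show ?thesis using EE_one[OF finI p1] by simp
  qed
  have DB: "D t t' \<le> Bd t t'" if tT: "t \<in> T" and t'T: "t' \<in> T" for t t'
  proof (cases "inj_on t {1..L} \<and> inj_on t' {1..L} \<and> t ` {1..L} \<inter> t' ` {1..L} = {}")
    case True
    have "D t t' = q * q - q * q - q * q + q * q * 1"
      unfolding D_def EE_expand Ph_def q_def
      using EE_Phi2[OF finI p1, of t t' Q] EE_Phi[OF finI p1, of t Q] EE_Phi[OF finI p1, of t' Q]
        EE_one[OF finI p1] True tT t'T T by simp
    then show ?thesis using Bd0[of t t'] by simp
  next
    case False
    have "1 \<le> Bd t t'"
    proof (cases "inj_on t {1..L} \<and> inj_on t' {1..L}")
      case True
      then obtain l l' where ll: "l \<in> {1..L}" "l' \<in> {1..L}" "t l = t' l'" using False by blast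
      have "1 \<le> (\<Sum>l'\<in>{1..L}. of_bool (t l = t' l') :: real)"
        using ll by (intro member_le_sum[of l', THEN order_trans[rotated]]) auto
      also have "\<dots> \<le> (\<Sum>l\<in>{1..L}. \<Sum>l'\<in>{1..L}. of_bool (t l = t' l'))"
        using ll by (intro member_le_sum) (auto intro: sum_nonneg)
      finally show ?thesis unfolding Bd_def by (auto intro: sum_nonneg order_trans)
    next
      case False
      have "0 \<le> (\<Sum>l\<in>{1..L}. \<Sum>l'\<in>{1..L}. of_bool (t l = t' l') :: real)" by (auto intro: sum_nonneg)
      then show ?thesis using False unfolding Bd_def by auto
    qed
    then show ?thesis using D1[of t t'] by simp
  qed
  have E2: "(\<Sum>t\<in>T. \<Sum>t'\<in>T. w t * w t' * D t t') \<le> (\<Sum>t\<in>T. \<Sum>t'\<in>T. w t * w t' * Bd t t')"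
    using DB w0 by (intro sum_mono mult_left_mono) auto
  define bw where "bw = sum w {t\<in>T. \<not> inj_on t {1..L}}"
  have sbad: "(\<Sum>t\<in>T. w t * of_bool (\<not> inj_on t {1..L})) = bw"
    unfolding bw_def using finT by (simp add: sum.inter_filter of_bool_def if_distrib cong: if_cong)
  have S1: "(\<Sum>t\<in>T. \<Sum>t'\<in>T. w t * w t' * of_bool (\<not> inj_on t {1..L})) = bw"
  proof -
    have "(\<Sum>t\<in>T. \<Sum>t'\<in>T. w t * w t' * of_bool (\<not> inj_on t {1..L})) =
          (\<Sum>t\<in>T. w t * of_bool (\<not> inj_on t {1..L}) * sum w T)"
      by (simp add: sum_distrib_left sum_distrib_right algebra_simps)
    then show ?thesis using w1 sbad by simp
  qed
  have S2: "(\<Sum>t\<in>T. \<Sum>t'\<in>T. w t * w t' * of_bool (\<not> inj_on t' {1..L})) = bw"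
  proof -
    have "(\<Sum>t\<in>T. \<Sum>t'\<in>T. w t * w t' * of_bool (\<not> inj_on t' {1..L})) =
          (\<Sum>t'\<in>T. \<Sum>t\<in>T. w t' * of_bool (\<not> inj_on t' {1..L}) * w t)"
      by (subst sum.swap) (simp add: algebra_simps)
    also have "\<dots> = (\<Sum>t'\<in>T. w t' * of_bool (\<not> inj_on t' {1..L}) * sum w T)"
      by (simp add: sum_distrib_left)
    finally show ?thesis using w1 sbad by simp
  qed
  have S3l: "(\<Sum>t\<in>T. \<Sum>t'\<in>T. w t * w t' * of_bool (t l = t' l')) = (\<Sum>i\<in>I. a i * a i)"
    if l: "l \<in> {1..L}" and l': "l' \<in> {1..L}" for l l'
  proof -
    have tlI: "t l \<in> I" if "t \<in> T" for t using that l unfolding T by auto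
    have inner: "(\<Sum>t'\<in>T. w t' * of_bool (t' l' = i)) = a i" if "i \<in> I" for i
      using wa[OF l' that] finT by (simp add: sum.inter_filter of_bool_def if_distrib cong: if_cong)
    have "(\<Sum>t\<in>T. \<Sum>t'\<in>T. w t * w t' * of_bool (t l = t' l')) = (\<Sum>t\<in>T. w t * (\<Sum>t'\<in>T. w t' * of_bool (t' l' = t l)))"
      by (simp add: sum_distrib_left algebra_simps eq_commute)
    also have "\<dots> = (\<Sum>t\<in>T. w t * a (t l))" using inner tlI by simp
    also have "\<dots> = (\<Sum>t\<in>T. \<Sum>i\<in>I. w t * a i * of_bool (t l = i))"
    proof (rule sum.cong[OF refl])
      fix t assume "t \<in> T"
      then have "(\<Sum>i\<in>I. w t * a i * of_bool (t l = i)) = w t * a (t l)"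
        using tlI finI by (simp add: of_bool_def if_distrib cong: if_cong)
      then show "w t * a (t l) = (\<Sum>i\<in>I. w t * a i * of_bool (t l = i))" by simp
    qed
    also have "\<dots> = (\<Sum>i\<in>I. a i * (\<Sum>t\<in>T. w t * of_bool (t l = i)))"
      by (subst sum.swap) (simp add: sum_distrib_left algebra_simps)
    also have "\<dots> = (\<Sum>i\<in>I. a i * a i)" using inner[unfolded] wa[OF l] finT
      by (intro sum.cong) (simp_all add: sum.inter_filter of_bool_def if_distrib cong: if_cong)
    finally show ?thesis .
  qed
  have asq: "(\<Sum>i\<in>I. a i * a i) \<le> \<delta>"
  proof -
    have "(\<Sum>i\<in>I. a i * a i) \<le> (\<Sum>i\<in>I. \<delta> * a i)" using ad a0 by (intro sum_mono mult_right_mono) auto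
    also have "\<dots> = \<delta>" using a1 by (simp add: sum_distrib_left[symmetric])
    finally show ?thesis .
  qed
  have "(\<Sum>t\<in>T. \<Sum>t'\<in>T. w t * w t' * Bd t t') =
        (\<Sum>t\<in>T. \<Sum>t'\<in>T. w t * w t' * of_bool (\<not> inj_on t {1..L}))
      + (\<Sum>t\<in>T. \<Sum>t'\<in>T. w t * w t' * of_bool (\<not> inj_on t' {1..L}))
      + (\<Sum>l\<in>{1..L}. \<Sum>l'\<in>{1..L}. \<Sum>t\<in>T. \<Sum>t'\<in>T. w t * w t' * of_bool (t l = t' l'))"
  proof -
    have "(\<Sum>t\<in>T. \<Sum>t'\<in>T. w t * w t' * Bd t t') = (\<Sum>t\<in>T. \<Sum>t'\<in>T. w t * w t' * of_bool (\<not> inj_on t {1..L})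
       + w t * w t' * of_bool (\<not> inj_on t' {1..L}) + (\<Sum>l\<in>{1..L}. \<Sum>l'\<in>{1..L}. w t * w t' * of_bool (t l = t' l')))"
      unfolding Bd_def by (simp only: distrib_left sum_distrib_left)
    also have "\<dots> = (\<Sum>t\<in>T. \<Sum>t'\<in>T. w t * w t' * of_bool (\<not> inj_on t {1..L}))
      + (\<Sum>t\<in>T. \<Sum>t'\<in>T. w t * w t' * of_bool (\<not> inj_on t' {1..L}))
      + (\<Sum>t\<in>T. \<Sum>t'\<in>T. \<Sum>l\<in>{1..L}. \<Sum>l'\<in>{1..L}. w t * w t' * of_bool (t l = t' l'))"
      by (simp only: sum.distrib)
    also have "(\<Sum>t\<in>T. \<Sum>t'\<in>T. \<Sum>l\<in>{1..L}. \<Sum>l'\<in>{1..L}. w t * w t' * of_bool (t l = t' l'))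
       = (\<Sum>l\<in>{1..L}. \<Sum>l'\<in>{1..L}. \<Sum>t\<in>T. \<Sum>t'\<in>T. w t * w t' * of_bool (t l = t' l'))"
      by (rule sum_swap4)
    finally show ?thesis .
  qed
  also have "\<dots> = bw + bw + (\<Sum>l\<in>{1..L}. \<Sum>l'\<in>{1..L}. \<Sum>i\<in>I. a i * a i)"
  proof -
    have S3: "(\<Sum>l\<in>{1..L}. \<Sum>l'\<in>{1..L}. \<Sum>t\<in>T. \<Sum>t'\<in>T. w t * w t' * of_bool (t l = t' l')) = (\<Sum>l\<in>{1..L}. \<Sum>l'\<in>{1..L}. \<Sum>i\<in>I. a i * a i)"
      by (intro sum.cong refl S3l) auto
    show ?thesis by (simp only: S1 S2 S3)
  qed
  also have "\<dots> = 2 * bw + real L ^ 2 * (\<Sum>i\<in>I. a i * a i)" by (simp add: power2_eq_square)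
  also have "\<dots> \<le> 2 * \<epsilon> + real L ^ 2 * \<delta>"
    using bad asq unfolding bw_def by (intro add_mono mult_left_mono) auto
  finally show ?thesis using E1 E2 unfolding q_def by linarith
qed

lemma gamma_facts:
  fixes \<gamma> :: "nat \<Rightarrow> real"
  assumes L1: "L \<ge> 1" and g0: "0 < \<gamma> L" and gdec: "\<forall>l\<in>{1..<L}. \<gamma> (l+1) < \<gamma> l" and g1: "\<gamma> 1 < 1"
  shows "\<And>l. l \<in> {1..L} \<Longrightarrow> 0 < \<gamma> l \<and> \<gamma> l < 1"
proof -
  have up: "1 \<le> l \<longrightarrow> l \<le> L \<longrightarrow> \<gamma> l \<le> \<gamma> 1" for l
  proof (induction l)
    case (Suc l)
    show ?case
    proof (cases "l = 0")
      case False
      then have "l \<in> {1..<L} \<longrightarrow> \<gamma> (l+1) < \<gamma> l" using gdec by blast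
      then show ?thesis using Suc False by auto
    qed simp
  qed simp
  have down: "m < L \<longrightarrow> \<gamma> L \<le> \<gamma> (L - m)" for m
  proof (induction m)
    case (Suc m)
    show ?case
    proof
      assume m: "Suc m < L"
      then have "L - Suc m \<in> {1..<L}" by auto
      then have "\<gamma> (L - Suc m + 1) < \<gamma> (L - Suc m)" using gdec by blast
      moreover have "L - Suc m + 1 = L - m" using m by auto
      ultimately show "\<gamma> L \<le> \<gamma> (L - Suc m)" using Suc m by auto
    qed
  qed simp
  fix l assume l: "l \<in> {1..L}"
  have "\<gamma> L \<le> \<gamma> l" using down[of "L - l"] l by auto
  moreover have "\<gamma> l \<le> \<gamma> 1" using up[of l] l by auto
  ultimately show "0 < \<gamma> l \<and> \<gamma> l < 1" using g0 g1 by auto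
qed

lemma p_facts:
  fixes \<gamma> :: "nat \<Rightarrow> real"
  assumes L1: "L \<ge> 1" and g0: "0 < \<gamma> L" and gdec: "\<forall>l\<in>{1..<L}. \<gamma> (l+1) < \<gamma> l" and g1: "\<gamma> 1 < 1"
    and p: "p = (\<lambda>v. if v = 0 then 1 - \<gamma> 1 else if v < L then \<gamma> v - \<gamma> (Suc v) else if v = L then \<gamma> L else 0)"
  shows "\<And>v. p v \<ge> 0" "(\<Sum>v\<in>{0..L}. p v) = 1"
    "\<And>l. l \<in> {1..L} \<Longrightarrow> (\<Sum>v\<in>{0..L}. p v * of_bool (l \<le> v)) = \<gamma> l"
    "\<And>l. l \<in> {1..L} \<Longrightarrow> (\<Sum>v\<in>{0..L}. p v * of_bool (\<not> l \<le> v)) = 1 - \<gamma> l"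
proof -
  show p0: "p v \<ge> 0" for v
  proof -
    consider "v = 0" | "v \<noteq> 0" "v < L" | "v = L" "v \<noteq> 0" | "v > L" by linarith
    then show ?thesis
    proof cases
      case 1 then show ?thesis using g1 p by simp
    next
      case 2 then have "v \<in> {1..<L}" by auto
      then show ?thesis using gdec 2 p by fastforce
    next
      case 3 then show ?thesis using g0 p by simp
    next
      case 4 then show ?thesis using p by simp
    qed
  qed
  have tail: "m < L \<longrightarrow> (\<Sum>v\<in>{L - m..L}. p v) = \<gamma> (L - m)" for m
  proof (induction m)
    case 0 then show ?case using L1 p by simp
  next
    case (Suc m)
    show ?case
    proof
      assume m: "Suc m < L"
      have e: "{L - Suc m..L} = insert (L - Suc m) {L - m..L}" using m by auto
      have "(\<Sum>v\<in>{L - Suc m..L}. p v) = p (L - Suc m) + (\<Sum>v\<in>{L - m..L}. p v)"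
        unfolding e using m by (subst sum.insert) auto
      also have "p (L - Suc m) = \<gamma> (L - Suc m) - \<gamma> (L - m)"
        using m p by (auto simp: Suc_diff_Suc)
      finally show "(\<Sum>v\<in>{L - Suc m..L}. p v) = \<gamma> (L - Suc m)" using Suc m by simp
    qed
  qed
  show ptail: "(\<Sum>v\<in>{0..L}. p v * of_bool (l \<le> v)) = \<gamma> l" if l: "l \<in> {1..L}" for l
  proof -
    have "(\<Sum>v\<in>{0..L}. p v * of_bool (l \<le> v)) = (\<Sum>v\<in>{v\<in>{0..L}. l \<le> v}. p v)"
    proof -
      have "(\<Sum>v\<in>{v\<in>{0..L}. l \<le> v}. p v) = (\<Sum>v\<in>{0..L}. if l \<le> v then p v else 0)"
        by (rule sum.inter_filter) simp
      then show ?thesis by (simp add: of_bool_def if_distrib cong: if_cong)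
    qed
    also have "{v\<in>{0..L}. l \<le> v} = {L - (L - l)..L}" using l by auto
    also have "(\<Sum>v\<in>{L - (L - l)..L}. p v) = \<gamma> (L - (L - l))" using tail[of "L - l"] l by auto
    finally show ?thesis using l by simp
  qed
  show p1: "(\<Sum>v\<in>{0..L}. p v) = 1"
  proof -
    have "(\<Sum>v\<in>{0..L}. p v) = p 0 + (\<Sum>v\<in>{Suc 0..L}. p v)" by (rule sum.atLeast_Suc_atMost) simp
    also have "(\<Sum>v\<in>{Suc 0..L}. p v) = \<gamma> 1" using tail[of "L - 1"] L1 by auto
    finally show ?thesis using p by simp
  qed
  show "(\<Sum>v\<in>{0..L}. p v * of_bool (\<not> l \<le> v)) = 1 - \<gamma> l" if l: "l \<in> {1..L}" for l
  proof -
    have "(\<Sum>v\<in>{0..L}. p v * of_bool (\<not> l \<le> v)) = (\<Sum>v\<in>{0..L}. p v - p v * of_bool (l \<le> v))"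
      by (intro sum.cong) auto
    also have "\<dots> = 1 - \<gamma> l" using p1 ptail[OF l] by (simp add: sum_subtractf)
    finally show ?thesis .
  qed
qed


locale erg = na_space M for M :: "'a::polish_space measure" +
  fixes \<tau> :: "'a \<Rightarrow> 'a"
  assumes sets_M: "sets M = sets borel" and invm: "invertible_mp_map M \<tau>" and ergm: "ergodic_map M \<tau>"
begin

lemma space_M: "space M = UNIV"
  using sets_eq_imp_space_eq[OF sets_M] by simp

lemma sets_UNIV[simp]: "A \<in> sets M \<Longrightarrow> A \<subseteq> UNIV" by simp

lemma tau_meas: "\<tau> \<in> measurable M M" and tau_distr: "distr M M \<tau> = M"
  and tau_bij: "bij \<tau>"
  using invm unfolding invertible_mp_map_def measure_preserving_map_def space_M by auto

definition \<sigma> :: "'a \<Rightarrow> 'a" where "\<sigma> = the_inv_into UNIV \<tau>"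

lemma sigma_meas: "\<sigma> \<in> measurable M M"
  using invm unfolding invertible_mp_map_def space_M \<sigma>_def by auto

lemma tau_inj: "inj \<tau>" using tau_bij bij_is_inj by blast
lemma tau_surj: "surj \<tau>" using tau_bij bij_is_surj by blast

lemma sigma_tau[simp]: "\<sigma> (\<tau> x) = x"
  unfolding \<sigma>_def using tau_inj by (simp add: the_inv_into_f_f)

lemma tau_sigma[simp]: "\<tau> (\<sigma> x) = x"
  unfolding \<sigma>_def using tau_inj tau_surj by (simp add: f_the_inv_into_f)

lemma meas_borel: "measurable M M = borel_measurable M"
  by (rule measurable_cong_sets) (auto simp: sets_M)

lemma preimage_sets: "f \<in> measurable M M \<Longrightarrow> A \<in> sets M \<Longrightarrow> f -` A \<in> sets M"
  using measurable_sets[of f M M A] by (simp add: space_M)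

lemma tau_pres: "A \<in> sets M \<Longrightarrow> measure M (\<tau> -` A) = measure M A"
  using measure_distr[OF tau_meas, of A] tau_distr by (simp add: space_M)

lemma sigma_pres: "A \<in> sets M \<Longrightarrow> measure M (\<sigma> -` A) = measure M A"
proof -
  assume A: "A \<in> sets M"
  have "\<tau> -` (\<sigma> -` A) = A" by auto
  then show ?thesis using tau_pres[OF preimage_sets[OF sigma_meas A]] by simp
qed

lemma sigmak_meas: "(\<sigma> ^^ k) \<in> measurable M M"
proof (induction k)
  case 0 then show ?case by (simp add: id_def)
next
  case (Suc k)
  have "(\<sigma> ^^ Suc k) = (\<lambda>x. (\<sigma> ^^ k) (\<sigma> x))" by (simp add: funpow_Suc_right o_def del: funpow.simps)
  then show ?case using measurable_compose[OF sigma_meas Suc] by simp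
qed

lemma tauk_meas: "(\<tau> ^^ k) \<in> measurable M M"
proof (induction k)
  case 0 then show ?case by (simp add: id_def)
next
  case (Suc k)
  have "(\<tau> ^^ Suc k) = (\<lambda>x. (\<tau> ^^ k) (\<tau> x))" by (simp add: funpow_Suc_right o_def del: funpow.simps)
  then show ?case using measurable_compose[OF tau_meas Suc] by simp
qed

lemma sigmak_sets: "A \<in> sets M \<Longrightarrow> (\<sigma> ^^ k) -` A \<in> sets M"
  by (rule preimage_sets[OF sigmak_meas])

lemma tauk_sets: "A \<in> sets M \<Longrightarrow> (\<tau> ^^ k) -` A \<in> sets M"
  by (rule preimage_sets[OF tauk_meas])

lemma sigmak_pres: "A \<in> sets M \<Longrightarrow> measure M ((\<sigma> ^^ k) -` A) = measure M A"
proof (induction k arbitrary: A)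
  case 0 then show ?case by simp
next
  case (Suc k)
  have eq: "(\<sigma> ^^ Suc k) -` A = \<sigma> -` ((\<sigma> ^^ k) -` A)" by (simp only: funpow_Suc_right vimage_comp)
  show ?case by (simp only: eq sigma_pres[OF sigmak_sets[OF Suc.prems]] Suc.IH[OF Suc.prems])
qed

lemma sigmak_tauk[simp]: "(\<sigma> ^^ k) ((\<tau> ^^ k) x) = x"
proof (induction k arbitrary: x)
  case (Suc k)
  have "(\<sigma> ^^ Suc k) ((\<tau> ^^ Suc k) x) = (\<sigma> ^^ k) (\<sigma> ((\<tau> ^^ Suc k) x))"
    by (simp only: funpow_Suc_right o_apply)
  also have "(\<tau> ^^ Suc k) x = \<tau> ((\<tau> ^^ k) x)" by simp
  finally have "(\<sigma> ^^ Suc k) ((\<tau> ^^ Suc k) x) = (\<sigma> ^^ k) (\<sigma> (\<tau> ((\<tau> ^^ k) x)))" by simp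
  then show ?case using Suc by simp
qed simp

lemma tauk_sigmak[simp]: "(\<tau> ^^ k) ((\<sigma> ^^ k) x) = x"
proof (induction k arbitrary: x)
  case (Suc k)
  have "(\<tau> ^^ Suc k) ((\<sigma> ^^ Suc k) x) = (\<tau> ^^ k) (\<tau> ((\<sigma> ^^ Suc k) x))"
    by (simp only: funpow_Suc_right o_apply)
  also have "(\<sigma> ^^ Suc k) x = \<sigma> ((\<sigma> ^^ k) x)" by simp
  finally have "(\<tau> ^^ Suc k) ((\<sigma> ^^ Suc k) x) = (\<tau> ^^ k) (\<tau> (\<sigma> ((\<sigma> ^^ k) x)))" by simp
  then show ?case using Suc by simp
qed simp

lemma image_tauk: "(\<tau> ^^ k) ` A = (\<sigma> ^^ k) -` A"
proof
  show "(\<tau> ^^ k) ` A \<subseteq> (\<sigma> ^^ k) -` A" by auto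
  show "(\<sigma> ^^ k) -` A \<subseteq> (\<tau> ^^ k) ` A"
  proof
    fix x assume "x \<in> (\<sigma> ^^ k) -` A"
    then have "(\<sigma> ^^ k) x \<in> A" by simp
    then show "x \<in> (\<tau> ^^ k) ` A" using tauk_sigmak[of k x] by (metis imageI)
  qed
qed

lemma fix_sigma_tau: "{x. (\<sigma> ^^ k) x = x} = {x. (\<tau> ^^ k) x = x}"
  by (metis sigmak_tauk tauk_sigmak)

lemma fix_sets: "{x. (\<tau> ^^ k) x = x} \<in> sets M"
proof -
  have "(\<tau> ^^ k) \<in> borel_measurable M" using tauk_meas meas_borel by simp
  moreover have "(\<lambda>x. x) \<in> borel_measurable M" by (simp add: meas_borel[symmetric])
  ultimately have "{x \<in> space M. (\<tau> ^^ k) x = x} \<in> sets M" by (rule measurable_equality_set)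
  then show ?thesis by (simp add: space_M)
qed

lemma ergodic: "A \<in> sets M \<Longrightarrow> \<tau> -` A = A \<Longrightarrow> measure M A = 0 \<or> measure M A = 1"
  using ergm unfolding ergodic_map_def space_M by auto

lemma singleton_null: "measure M {z} = 0"
proof (rule ccontr)
  assume "measure M {z} \<noteq> 0"
  then have "measure M {z} > 0" using measure_nonneg[of M "{z}"] by linarith
  moreover have "{z} \<in> sets M" by (simp add: sets_M)
  ultimately obtain B where "B \<in> sets M" "B \<subseteq> {z}" "0 < measure M B" "measure M B < measure M {z}"
    using na unfolding non_atomic_def by blast
  then show False by (metis less_irrefl measure_empty subset_singletonD)
qed

lemma ex_basis: "\<exists>Bn :: nat \<Rightarrow> 'a set. (\<forall>j. open (Bn j)) \<and>
   (\<forall>U x. open U \<longrightarrow> x \<in> U \<longrightarrow> (\<exists>j. x \<in> Bn j \<and> Bn j \<subseteq> U))"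
proof -
  obtain B :: "'a set set" where B: "countable B" "topological_basis B" using ex_countable_basis by blast
  have ne: "B \<noteq> {}"
  proof
    assume "B = {}"
    have "open (UNIV :: 'a set)" by simp
    then obtain V where "V \<in> B" using topological_basisE[OF B(2), of UNIV "undefined::'a"] by blast
    then show False using \<open>B = {}\<close> by simp
  qed
  define Bn where "Bn = from_nat_into B"
  have r: "range Bn = B" unfolding Bn_def using range_from_nat_into[OF ne B(1)] .
  show ?thesis
  proof (intro exI[of _ Bn] conjI allI impI)
    fix j show "open (Bn j)" using r topological_basis_open[OF B(2)] by blast
  next
    fix U :: "'a set" and x :: 'a assume "open U" "x \<in> U"
    then obtain V where "V \<in> B" "x \<in> V" "V \<subseteq> U" using topological_basisE[OF B(2)] by blast
    then show "\<exists>j. x \<in> Bn j \<and> Bn j \<subseteq> U" using r by (metis imageE)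
  qed
qed

lemma aperiodic:
  assumes k: "k \<ge> 1"
  shows "measure M {x. (\<tau> ^^ k) x = x} = 0"
proof (rule ccontr)
  define P where "P = {x. (\<tau> ^^ k) x = x}"
  assume "measure M {x. (\<tau> ^^ k) x = x} \<noteq> 0"
  then have nz: "measure M P \<noteq> 0" by (simp add: P_def)
  have Ps: "P \<in> sets M" using fix_sets by (simp add: P_def)
  have Pinv: "\<tau> -` P = P"
  proof -
    have "(\<tau> ^^ k) (\<tau> x) = \<tau> x \<longleftrightarrow> (\<tau> ^^ k) x = x" for x
      using tau_inj by (simp add: funpow_swap1[symmetric] inj_eq)
    then show ?thesis by (auto simp: P_def)
  qed
  have P1: "measure M P = 1" using ergodic[OF Ps Pinv] nz by auto
  obtain Bn :: "nat \<Rightarrow> 'a set" where Bo: "\<And>j. open (Bn j)"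
    and Bb: "\<And>U x. open U \<Longrightarrow> x \<in> U \<Longrightarrow> \<exists>j. x \<in> Bn j \<and> Bn j \<subseteq> U"
    using ex_basis by blast
  define E where "E j = (\<Union>i<k. (\<tau> ^^ i) -` Bn j) \<inter> P" for j
  have Es: "E j \<in> sets M" for j
  proof -
    have "Bn j \<in> sets M" using Bo by (simp add: sets_M)
    then show ?thesis unfolding E_def using tauk_sets Ps by auto
  qed
  have Einv: "\<tau> -` E j = E j" for j
  proof -
    have "\<tau> x \<in> E j \<longleftrightarrow> x \<in> E j" for x
    proof (cases "x \<in> P")
      case False then show ?thesis using Pinv by (auto simp: E_def)
    next
      case True
      then have xP: "(\<tau> ^^ k) x = x" by (simp add: P_def)
      have "\<tau> x \<in> P" using True Pinv by auto
      have sh: "(\<tau> ^^ i) (\<tau> x) = (\<tau> ^^ Suc i) x" for i by (simp only: funpow_Suc_right o_apply)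
      obtain m where km: "k = Suc m" using k by (cases k) auto
      have "(\<exists>i<k. (\<tau> ^^ i) (\<tau> x) \<in> Bn j) \<longleftrightarrow> (\<exists>i<k. (\<tau> ^^ i) x \<in> Bn j)"
      proof
        assume "\<exists>i<k. (\<tau> ^^ i) (\<tau> x) \<in> Bn j"
        then obtain i where i: "i < k" "(\<tau> ^^ Suc i) x \<in> Bn j" unfolding sh by blast
        show "\<exists>i<k. (\<tau> ^^ i) x \<in> Bn j"
        proof (cases "Suc i = k")
          case True then have "(\<tau> ^^ 0) x \<in> Bn j" using i xP by simp
          then show ?thesis using km by blast
        next
          case False then show ?thesis using i by (intro exI[of _ "Suc i"]) auto
        qed
      next
        assume "\<exists>i<k. (\<tau> ^^ i) x \<in> Bn j"
        then obtain i where i: "i < k" "(\<tau> ^^ i) x \<in> Bn j" by auto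
        show "\<exists>i<k. (\<tau> ^^ i) (\<tau> x) \<in> Bn j"
        proof (cases i)
          case 0
          have "(\<tau> ^^ m) (\<tau> x) \<in> Bn j" unfolding sh using 0 i xP km by simp
          then show ?thesis using km by blast
        next
          case (Suc i')
          then have "(\<tau> ^^ i') (\<tau> x) \<in> Bn j" unfolding sh using i by simp
          then show ?thesis using i Suc by (intro exI[of _ i']) auto
        qed
      qed
      then show ?thesis using True \<open>\<tau> x \<in> P\<close> by (auto simp: E_def)
    qed
    then show ?thesis by auto
  qed
  define G where "G j = (if measure M (E j) = 1 then E j else - E j)" for j
  have AEG: "AE x in M. \<forall>j. x \<in> G j"
  proof (subst AE_all_countable, intro allI)
    fix j
    show "AE x in M. x \<in> G j"
    proof (cases "measure M (E j) = 1")
      case True then show ?thesis using prob_eq_1[OF Es] by (simp add: G_def)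
    next
      case False
      then have "measure M (E j) = 0" using ergodic[OF Es Einv] by auto
      then show ?thesis using prob_eq_0[OF Es] False by (simp add: G_def)
    qed
  qed
  have AEP: "AE x in M. x \<in> P" using prob_eq_1[OF Ps] P1 by simp
  have AEx: "AE x in M. x \<in> P \<and> (\<forall>j. x \<in> G j)" using AEG AEP by eventually_elim auto
  have "\<exists>x. x \<in> P \<and> (\<forall>j. x \<in> G j)"
  proof (rule ccontr)
    assume nx: "\<not> (\<exists>x. x \<in> P \<and> (\<forall>j. x \<in> G j))"
    have "AE x in M. False" using AEx by eventually_elim (use nx in blast)
    then show False using AE_False by simp
  qed
  then obtain x0 where x0: "x0 \<in> P" "\<forall>j. x0 \<in> G j" by blast
  define Orb where "Orb = (\<lambda>i. (\<tau> ^^ i) x0) ` {..<k}"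
  have sub: "y \<in> Orb" if y: "y \<in> P" "\<forall>j. y \<in> G j" for y
  proof (rule ccontr)
    assume "y \<notin> Orb"
    have "open (- Orb)" using finite_imp_closed[of Orb] by (auto simp: Orb_def)
    then obtain j where j: "y \<in> Bn j" "Bn j \<subseteq> - Orb" using Bb[of "- Orb" y] \<open>y \<notin> Orb\<close> by blast
    have "0 \<in> {..<k}" using k by simp
    moreover have "(\<tau> ^^ 0) y \<in> Bn j" using j by simp
    ultimately have "y \<in> E j" using y unfolding E_def by blast
    then have "measure M (E j) = 1" using y(2) by (auto simp: G_def split: if_splits)
    then have "x0 \<in> E j" using x0(2) by (auto simp: G_def dest: spec[of _ j])
    then obtain i where "i < k" "(\<tau> ^^ i) x0 \<in> Bn j" by (auto simp: E_def)
    then show False using j(2) by (auto simp: Orb_def)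
  qed
  have "AE y in M. y \<in> Orb" using AEx by eventually_elim (use sub in blast)
  moreover have Os: "Orb \<in> sets M" using finite_imp_closed[of Orb] by (auto simp: Orb_def sets_M)
  ultimately have "measure M Orb = 1" using prob_eq_1 by simp
  moreover have "measure M Orb \<le> (\<Sum>i<k. measure M {(\<tau> ^^ i) x0})"
  proof -
    have "Orb = (\<Union>i\<in>{..<k}. {(\<tau> ^^ i) x0})" by (auto simp: Orb_def)
    also have "measure M \<dots> \<le> (\<Sum>i<k. measure M {(\<tau> ^^ i) x0})"
      by (rule measure_UNION_le) (auto simp: sets_M)
    finally show ?thesis .
  qed
  ultimately show False using singleton_null by simp
qed

lemma aperiodic_sigma:
  assumes k: "k \<ge> 1"
  shows "measure M {x. (\<sigma> ^^ k) x = x} = 0"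
  using aperiodic[OF k] fix_sigma_tau by simp

end

context na_space
begin

definition eqsplit :: "'a set \<Rightarrow> nat \<Rightarrow> (nat \<Rightarrow> 'a set) \<Rightarrow> bool" where
  "eqsplit A R P \<longleftrightarrow> (\<forall>r<Suc R. P r \<in> sets M \<and> P r \<subseteq> A \<and> measure M (P r) = measure M A / real (Suc R))
     \<and> (\<forall>r<Suc R. \<forall>r'<Suc R. r \<noteq> r' \<longrightarrow> P r \<inter> P r' = {}) \<and> (\<Union>r<Suc R. P r) = A"

lemma split_equal0:
  "A \<in> sets M \<Longrightarrow> \<exists>P::nat \<Rightarrow> 'a set. (\<forall>r<Suc R. P r \<in> sets M \<and> P r \<subseteq> A \<and> measure M (P r) = measure M A / real (Suc R))
     \<and> (\<forall>r<Suc R. \<forall>r'<Suc R. r \<noteq> r' \<longrightarrow> P r \<inter> P r' = {}) \<and> (\<Union>r<Suc R. P r) = A"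
proof (induction R arbitrary: A)
  case 0 then show ?case by (intro exI[of _ "\<lambda>_. A"]) auto
next
  case (Suc R)
  have nn: "0 \<le> measure M A / real (Suc (Suc R))" by simp
  have le: "measure M A / real (Suc (Suc R)) \<le> measure M A"
    by (simp add: divide_le_eq_1 field_simps)
  obtain Q where Q: "Q \<in> sets M" "Q \<subseteq> A" "measure M Q = measure M A / real (Suc (Suc R))"
    using sierpinski[OF Suc.prems nn le] by blast
  have AQ: "A - Q \<in> sets M" using Q Suc.prems by auto
  have mAQ: "measure M (A - Q) = measure M A - measure M A / real (Suc (Suc R))"
    using Q Suc.prems by (simp add: finite_measure_Diff)
  have mAQ': "measure M (A - Q) / real (Suc R) = measure M A / real (Suc (Suc R))"
  proof -
    obtain b where b: "b = measure M A / real (Suc (Suc R))" by simp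
    have "measure M A = b * real (Suc (Suc R))" using b by simp
    then have "measure M A - b = b * real (Suc R)" by (simp add: algebra_simps)
    then have "(measure M A - b) / real (Suc R) = b" by simp
    then show ?thesis using mAQ b by simp
  qed
  obtain P where P: "\<forall>r<Suc R. P r \<in> sets M \<and> P r \<subseteq> A - Q \<and> measure M (P r) = measure M (A - Q) / real (Suc R)"
    "\<forall>r<Suc R. \<forall>r'<Suc R. r \<noteq> r' \<longrightarrow> P r \<inter> P r' = {}" "(\<Union>r<Suc R. P r) = A - Q"
    using Suc.IH[OF AQ] by blast
  define P' where "P' = P(Suc R := Q)"
  have A1: "\<forall>r<Suc (Suc R). P' r \<in> sets M \<and> P' r \<subseteq> A \<and> measure M (P' r) = measure M A / real (Suc (Suc R))"
  proof (intro allI impI)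
    fix r assume r: "r < Suc (Suc R)"
    show "P' r \<in> sets M \<and> P' r \<subseteq> A \<and> measure M (P' r) = measure M A / real (Suc (Suc R))"
    proof (cases "r = Suc R")
      case True then show ?thesis using Q by (simp add: P'_def)
    next
      case False then have "r < Suc R" using r by simp
      then show ?thesis using P(1) False mAQ' by (auto simp: P'_def)
    qed
  qed
  have A2: "\<forall>r<Suc (Suc R). \<forall>r'<Suc (Suc R). r \<noteq> r' \<longrightarrow> P' r \<inter> P' r' = {}"
  proof (intro allI impI)
    fix r r' assume r: "r < Suc (Suc R)" "r' < Suc (Suc R)" "r \<noteq> r'"
    show "P' r \<inter> P' r' = {}"
    proof (cases "r = Suc R")
      case True then have "r' < Suc R" using r by simp
      then have "P r' \<subseteq> A - Q" using P(1) by blast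
      then show ?thesis using True r by (auto simp: P'_def)
    next
      case False then have rr: "r < Suc R" using r by simp
      show ?thesis
      proof (cases "r' = Suc R")
        case True
        have "P r \<subseteq> A - Q" using P(1) rr by blast
        then show ?thesis using True r by (auto simp: P'_def)
      next
        case False then have "r' < Suc R" using r by simp
        then show ?thesis using P(2) rr r False \<open>r \<noteq> Suc R\<close> by (auto simp: P'_def)
      qed
    qed
  qed
  have A3: "(\<Union>r<Suc (Suc R). P' r) = A"
  proof -
    have "(\<Union>r<Suc (Suc R). P' r) = (\<Union>r<Suc R. P' r) \<union> P' (Suc R)" by (simp add: lessThan_Suc Un_commute)
    also have "(\<Union>r<Suc R. P' r) = (\<Union>r<Suc R. P r)" by (auto simp: P'_def)
    also have "\<dots> \<union> P' (Suc R) = A" using P(3) Q by (auto simp: P'_def)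
    finally show ?thesis .
  qed
  show ?case using A1 A2 A3 by blast
qed

lemma split_equal: "A \<in> sets M \<Longrightarrow> \<exists>P. eqsplit A R P"
  unfolding eqsplit_def by (rule split_equal0)

end

lemma same_cell_sets:
  assumes "finite I" "\<And>x. c x \<in> I" "\<And>i. i \<in> I \<Longrightarrow> c -` {i} \<in> sets M"
    and f: "f \<in> measurable M M" and sp: "space M = UNIV"
  shows "{x. c (f x) = c x} \<in> sets M"
proof -
  have "{x. c (f x) = c x} = (\<Union>i\<in>I. f -` (c -` {i}) \<inter> c -` {i})" using assms(2) by auto
  moreover have "f -` (c -` {i}) \<in> sets M" if "i \<in> I" for i
    using measurable_sets[OF f assms(3)[OF that]] sp by simp
  ultimately show ?thesis using assms by auto
qed

context erg
begin

lemma partition_exists: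
  assumes d: "\<delta> > 0" and e: "\<epsilon> > 0"
  shows "\<exists>(c :: 'a \<Rightarrow> nat set \<times> nat) I. finite I \<and> (\<forall>x. c x \<in> I) \<and>
     (\<forall>i\<in>I. c -` {i} \<in> sets M \<and> measure M (c -` {i}) \<le> \<delta>) \<and>
     (\<forall>k\<in>{1..<L}. measure M {x. c ((\<sigma> ^^ k) x) = c x} \<le> \<epsilon>)"
proof -
  obtain Bn :: "nat \<Rightarrow> 'a set" where Bo: "\<And>j. open (Bn j)"
    and Bb: "\<And>U x. open U \<Longrightarrow> x \<in> U \<Longrightarrow> \<exists>j. x \<in> Bn j \<and> Bn j \<subseteq> U"
    using ex_basis by blast
  have Bs: "Bn j \<in> sets M" for j using Bo by (simp add: sets_M)
  define D where "D n k = {x. \<forall>j<n. (x \<in> Bn j) = ((\<sigma> ^^ k) x \<in> Bn j)}" for n k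
  have Deq: "D n k = UNIV - (\<Union>j<n. (Bn j - (\<sigma> ^^ k) -` Bn j) \<union> ((\<sigma> ^^ k) -` Bn j - Bn j))" for n k
    by (auto simp: D_def)
  have Ds: "D n k \<in> sets M" for n k
    unfolding Deq using Bs sigmak_sets[OF Bs] sets.top[of M] space_M by (auto intro!: sets.Diff)
  have lim0: "(\<lambda>n. measure M (D n k)) \<longlonglongrightarrow> 0" if k: "k \<ge> 1" for k
  proof -
    have "(\<lambda>n. measure M (D n k)) \<longlonglongrightarrow> measure M (\<Inter>n. D n k)"
      using Ds by (intro finite_Lim_measure_decseq) (auto simp: decseq_Suc_iff D_def)
    moreover have "measure M (\<Inter>n. D n k) = 0"
    proof -
      have "(\<Inter>n. D n k) \<subseteq> {x. (\<sigma> ^^ k) x = x}"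
      proof
        fix x assume x: "x \<in> (\<Inter>n. D n k)"
        show "x \<in> {x. (\<sigma> ^^ k) x = x}"
        proof (rule ccontr)
          assume "x \<notin> {x. (\<sigma> ^^ k) x = x}"
          then have "x \<noteq> (\<sigma> ^^ k) x" by simp
          then obtain U where "open U" "x \<in> U" "(\<sigma> ^^ k) x \<notin> U" using separation_t1 by blast
          then obtain j where "x \<in> Bn j" "Bn j \<subseteq> U" using Bb by blast
          then have "x \<notin> D (Suc j) k" using \<open>(\<sigma> ^^ k) x \<notin> U\<close> by (auto simp: D_def)
          then show False using x by blast
        qed
      qed
      then have "measure M (\<Inter>n. D n k) \<le> measure M {x. (\<sigma> ^^ k) x = x}"
        using fix_sets fix_sigma_tau by (intro finite_measure_mono) auto
      then show ?thesis using aperiodic_sigma[OF k] measure_nonneg[of M "\<Inter>n. D n k"] by simp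
    qed
    ultimately show ?thesis by simp
  qed
  have "eventually (\<lambda>n. \<forall>k\<in>{1..<L}. measure M (D n k) < \<epsilon>) sequentially"
  proof (rule eventually_ball_finite)
    show "finite {1..<L}" by simp
    show "\<forall>k\<in>{1..<L}. eventually (\<lambda>n. measure M (D n k) < \<epsilon>) sequentially"
    proof
      fix k assume "k \<in> {1..<L}"
      then have "k \<ge> 1" by simp
      show "eventually (\<lambda>n. measure M (D n k) < \<epsilon>) sequentially"
        using lim0[OF \<open>k \<ge> 1\<close>] e by (rule order_tendstoD(2))
    qed
  qed
  then obtain N where "\<forall>n\<ge>N. \<forall>k\<in>{1..<L}. measure M (D n k) < \<epsilon>"
    by (auto simp only: eventually_sequentially)
  then have n: "\<And>k. k \<in> {1..<L} \<Longrightarrow> measure M (D N k) < \<epsilon>" by blast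
  define n where "n = N"
  define c0 where "c0 x = {j\<in>{..<n}. x \<in> Bn j}" for x
  define I0 where "I0 = Pow {..<n}"
  have c0I: "c0 x \<in> I0" for x by (auto simp: c0_def I0_def)
  have c0s: "c0 -` {s} \<in> sets M" if "s \<in> I0" for s
  proof -
    define F where "F j = (if j \<in> s then - Bn j else Bn j)" for j
    have sub: "s \<subseteq> {..<n}" using that by (simp add: I0_def)
    have "x \<in> c0 -` {s} \<longleftrightarrow> x \<in> UNIV - (\<Union>j<n. F j)" for x
    proof
      assume "x \<in> c0 -` {s}"
      then have "{j\<in>{..<n}. x \<in> Bn j} = s" by (simp add: c0_def)
      then show "x \<in> UNIV - (\<Union>j<n. F j)" by (auto simp: F_def)
    next
      assume "x \<in> UNIV - (\<Union>j<n. F j)"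
      then have "\<forall>j<n. x \<notin> F j" by blast
      have "{j\<in>{..<n}. x \<in> Bn j} = s"
      proof (rule set_eqI)
        fix j
        show "j \<in> {j\<in>{..<n}. x \<in> Bn j} \<longleftrightarrow> j \<in> s"
        proof (cases "j < n")
          case True
          then have "x \<notin> F j" using \<open>\<forall>j<n. x \<notin> F j\<close> by blast
          then show ?thesis using True by (cases "j \<in> s") (auto simp: F_def)
        next
          case False then show ?thesis using sub by auto
        qed
      qed
      then show "x \<in> c0 -` {s}" by (simp add: c0_def)
    qed
    then have eq: "c0 -` {s} = UNIV - (\<Union>j<n. F j)" by blast
    have Fs: "F j \<in> sets M" for j
      using Bs[of j] sets.compl_sets[of "Bn j" M] space_M by (simp add: F_def Compl_eq_Diff_UNIV)
    have "(\<Union>j<n. F j) \<in> sets M" using Fs by (intro sets.finite_UN) auto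
    then show ?thesis unfolding eq using sets.Diff[OF sets.top] space_M by metis
  qed
  have c0D: "{x. c0 ((\<sigma> ^^ k) x) = c0 x} = D n k" for k
    by (auto simp: c0_def D_def set_eq_iff)
  obtain R :: nat where R: "1 / real (Suc R) \<le> \<delta>"
  proof -
    obtain R where "1 / \<delta> < real R" using reals_Archimedean2 by blast
    then have "1 / real (Suc R) \<le> \<delta>" using d by (simp add: field_simps)
    then show ?thesis using that by blast
  qed
  have ex: "\<forall>s. \<exists>P. s \<in> I0 \<longrightarrow> eqsplit (c0 -` {s}) R P" using split_equal c0s by blast
  obtain Pf where Pf0: "\<forall>s. s \<in> I0 \<longrightarrow> eqsplit (c0 -` {s}) R (Pf s)" using choice[OF ex] by blast
  have Pf: "\<And>s. s \<in> I0 \<Longrightarrow> (\<forall>r<Suc R. Pf s r \<in> sets M \<and> Pf s r \<subseteq> c0 -` {s} \<and> measure M (Pf s r) = measure M (c0 -` {s}) / real (Suc R))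
     \<and> (\<forall>r<Suc R. \<forall>r'<Suc R. r \<noteq> r' \<longrightarrow> Pf s r \<inter> Pf s r' = {}) \<and> (\<Union>r<Suc R. Pf s r) = c0 -` {s}"
    using Pf0 unfolding eqsplit_def by blast
  define c where "c x = (c0 x, SOME r. r < Suc R \<and> x \<in> Pf (c0 x) r)" for x
  define I where "I = I0 \<times> {..<Suc R}"
  have ex_r: "\<exists>r. r < Suc R \<and> x \<in> Pf (c0 x) r" for x
  proof -
    have "x \<in> c0 -` {c0 x}" by simp
    then have "x \<in> (\<Union>r<Suc R. Pf (c0 x) r)" using Pf[OF c0I[of x]] by simp
    then show ?thesis by blast
  qed
  have cr: "snd (c x) < Suc R \<and> x \<in> Pf (c0 x) (snd (c x))" for x
    unfolding c_def snd_conv by (rule someI_ex[OF ex_r])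
  have cI: "c x \<in> I" for x using cr[of x] c0I[of x] by (auto simp: I_def c_def)
  have cpre: "c -` {(s, r)} = Pf s r" if "(s, r) \<in> I" for s r
  proof
    show "c -` {(s, r)} \<subseteq> Pf s r" using cr by (auto simp: c_def)
    show "Pf s r \<subseteq> c -` {(s, r)}"
    proof
      fix x assume x: "x \<in> Pf s r"
      have sI: "s \<in> I0" "r < Suc R" using that by (auto simp: I_def)
      have "c0 x = s" using Pf[OF sI(1)] sI(2) x by blast
      moreover have "snd (c x) = r"
      proof (rule ccontr)
        assume ne: "snd (c x) \<noteq> r"
        have "x \<in> Pf s (snd (c x))" using cr[of x] \<open>c0 x = s\<close> by simp
        then show False using Pf[OF sI(1)] cr[of x] sI(2) ne x by blast
      qed
      ultimately show "x \<in> c -` {(s, r)}" by (simp add: c_def)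
    qed
  qed
  have cs: "c -` {i} \<in> sets M" if i: "i \<in> I" for i
  proof -
    obtain s r where sr: "i = (s, r)" by fastforce
    have sI: "s \<in> I0" "r < Suc R" using i sr by (auto simp: I_def)
    show ?thesis using cpre[of s r] i sr Pf[OF sI(1)] sI(2) by auto
  qed
  have finI: "finite I" by (simp add: I_def I0_def)
  show ?thesis
  proof (intro exI[of _ c] exI[of _ I] conjI ballI allI)
    show "finite I" by (simp add: I_def I0_def)
    show "c x \<in> I" for x by (rule cI)
    fix i assume i: "i \<in> I"
    obtain s r where sr: "i = (s, r)" by fastforce
    have sI: "s \<in> I0" "r < Suc R" using i sr by (auto simp: I_def)
    show "c -` {i} \<in> sets M" using cpre[of s r] i sr Pf[OF sI(1)] sI(2) by auto
    have "measure M (c -` {i}) = measure M (c0 -` {s}) / real (Suc R)"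
      using cpre[of s r] i sr Pf[OF sI(1)] sI(2) by auto
    also have "\<dots> \<le> 1 / real (Suc R)" by (rule divide_right_mono) auto
    finally show "measure M (c -` {i}) \<le> \<delta>" using R by linarith
  next
    fix k assume k: "k \<in> {1..<L}"
    have "{x. c ((\<sigma> ^^ k) x) = c x} \<in> sets M"
      by (rule same_cell_sets[where I=I and c=c, OF finI cI cs sigmak_meas space_M])
    moreover have "{x. c ((\<sigma> ^^ k) x) = c x} \<subseteq> D n k" using c0D[of k] by (auto simp: c_def)
    ultimately have "measure M {x. c ((\<sigma> ^^ k) x) = c x} \<le> measure M (D n k)"
      using Ds by (intro finite_measure_mono) auto
    then show "measure M {x. c ((\<sigma> ^^ k) x) = c x} \<le> \<epsilon>" using n[OF k] by (simp add: n_def)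
  qed
qed

end

context na_space
begin

lemma adjust_step:
  assumes W: "W \<in> sets M" and U: "U \<in> sets M" and g: "0 \<le> g" "g < measure M W"
  shows "\<exists>V\<in>sets M. V \<subseteq> W \<and> measure M V = g \<and>
     measure M ((V - U) \<union> (U - V)) \<le> 2 * measure M (U - W) + \<bar>measure M U - g\<bar>"
proof -
  define A where "A = U \<inter> W"
  have As: "A \<in> sets M" using U W by (auto simp: A_def)
  have mA: "measure M A = measure M U - measure M (U - W)"
  proof -
    have "U = A \<union> (U - W)" "A \<inter> (U - W) = {}" by (auto simp: A_def)
    then have "measure M U = measure M A + measure M (U - W)"
      using As U W by (metis finite_measure_Union sets.Diff)
    then show ?thesis by simp
  qed
  show ?thesis
  proof (cases "g \<le> measure M A")
    case True
    obtain V where V: "V \<in> sets M" "V \<subseteq> A" "measure M V = g" using sierpinski[OF As g(1) True] by blast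
    have "(V - U) \<union> (U - V) = U - V" using V(2) by (auto simp: A_def)
    moreover have "measure M (U - V) = measure M U - g" using V U A_def by (subst finite_measure_Diff) auto
    moreover have "0 \<le> measure M (U - W)" by simp
    moreover have "measure M U - g \<le> \<bar>measure M U - g\<bar>" by (rule abs_ge_self)
    ultimately have "measure M ((V - U) \<union> (U - V)) \<le> 2 * measure M (U - W) + \<bar>measure M U - g\<bar>"
      by (simp only:)
    then show ?thesis using V by (intro bexI[of _ V]) (auto simp: A_def)
  next
    case False
    have WAs: "W - A \<in> sets M" using W As by auto
    have mWA: "measure M (W - A) = measure M W - measure M A"
      using W As by (subst finite_measure_Diff) (auto simp: A_def)
    have "0 \<le> g - measure M A" "g - measure M A \<le> measure M (W - A)" using False g mWA by auto
    then obtain B where B: "B \<in> sets M" "B \<subseteq> W - A" "measure M B = g - measure M A"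
      using sierpinski[OF WAs] by blast
    define V where "V = A \<union> B"
    have BU: "B \<inter> U = {}" using B(2) by (auto simp: A_def)
    have Vs: "V \<in> sets M" using As B by (auto simp: V_def)
    have mV: "measure M V = g"
    proof -
      have "A \<inter> B = {}" using B(2) by auto
      then have "measure M V = measure M A + measure M B" using As B(1) by (simp add: V_def finite_measure_Union)
      then show ?thesis using B(3) by simp
    qed
    have "(V - U) \<union> (U - V) = B \<union> (U - W)" using B(2) BU by (auto simp: V_def A_def)
    then have "measure M ((V - U) \<union> (U - V)) \<le> measure M B + measure M (U - W)"
      using B(1) U W by (simp add: measure_Un_le)
    also have "\<dots> = g - measure M U + 2 * measure M (U - W)" using B(3) mA by simp
    also have "\<dots> \<le> 2 * measure M (U - W) + \<bar>measure M U - g\<bar>" by simp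
    finally show ?thesis using Vs mV B(2) by (intro bexI[of _ V]) (auto simp: V_def A_def)
  qed
qed

end

lemma prod_of_bool: "finite A \<Longrightarrow> (\<Prod>l\<in>A. of_bool (P l) :: real) = of_bool (\<forall>l\<in>A. P l)"
  by (induction A rule: finite_induct) auto

context erg
begin

lemma inter_sets:
  assumes "\<And>l. l \<in> {1..L} \<Longrightarrow> A l \<in> sets M"
  shows "(\<Inter>l\<in>{1..L}. (\<sigma> ^^ (l - 1)) -` A l) \<in> sets M"
proof (cases "L = 0")
  case True then show ?thesis using sets.top[of M] by (simp add: space_M)
next
  case False
  then show ?thesis using assms sigmak_sets by (intro sets.finite_INT) auto
qed

lemma perturb:
  assumes A: "\<And>l. l \<in> {1..L} \<Longrightarrow> A l \<in> sets M" and B: "\<And>l. l \<in> {1..L} \<Longrightarrow> B l \<in> sets M"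
  shows "\<bar>measure M (\<Inter>l\<in>{1..L}. (\<sigma> ^^ (l - 1)) -` A l) - measure M (\<Inter>l\<in>{1..L}. (\<sigma> ^^ (l - 1)) -` B l)\<bar>
    \<le> (\<Sum>l\<in>{1..L}. measure M ((A l - B l) \<union> (B l - A l)))"
proof -
  define SA where "SA = (\<Inter>l\<in>{1..L}. (\<sigma> ^^ (l - 1)) -` A l)"
  define SB where "SB = (\<Inter>l\<in>{1..L}. (\<sigma> ^^ (l - 1)) -` B l)"
  have SAs: "SA \<in> sets M" unfolding SA_def by (rule inter_sets[OF A])
  have SBs: "SB \<in> sets M" unfolding SB_def by (rule inter_sets[OF B])
  have D: "\<And>l. l \<in> {1..L} \<Longrightarrow> (A l - B l) \<union> (B l - A l) \<in> sets M" using A B by auto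
  have one: "measure M X - measure M Y \<le> (\<Sum>l\<in>{1..L}. measure M ((A l - B l) \<union> (B l - A l)))"
    if XY: "X = (\<Inter>l\<in>{1..L}. (\<sigma> ^^ (l - 1)) -` C l)" "Y = (\<Inter>l\<in>{1..L}. (\<sigma> ^^ (l - 1)) -` C' l)"
       and C: "\<And>l. l \<in> {1..L} \<Longrightarrow> C l \<in> sets M" and C': "\<And>l. l \<in> {1..L} \<Longrightarrow> C' l \<in> sets M"
       and CC: "\<And>l. l \<in> {1..L} \<Longrightarrow> C l - C' l \<subseteq> (A l - B l) \<union> (B l - A l)" for X Y C C'
  proof -
    have Xs: "X \<in> sets M" unfolding XY by (rule inter_sets[OF C])
    have Ys: "Y \<in> sets M" unfolding XY by (rule inter_sets[OF C'])
    have "X \<subseteq> Y \<union> (X - Y)" by auto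
    then have "measure M X \<le> measure M (Y \<union> (X - Y))" using Xs Ys by (intro finite_measure_mono) auto
    also have "\<dots> \<le> measure M Y + measure M (X - Y)" using Xs Ys by (intro measure_Un_le) auto
    finally have 1: "measure M X - measure M Y \<le> measure M (X - Y)" by simp
    have "X - Y \<subseteq> (\<Union>l\<in>{1..L}. (\<sigma> ^^ (l - 1)) -` ((A l - B l) \<union> (B l - A l)))"
      unfolding XY using CC by blast
    moreover have "(\<Union>l\<in>{1..L}. (\<sigma> ^^ (l - 1)) -` ((A l - B l) \<union> (B l - A l))) \<in> sets M"
    proof (rule sets.finite_UN)
      show "finite {1..L}" by simp
      fix l assume l: "l \<in> {1..L}"
      show "(\<sigma> ^^ (l - 1)) -` ((A l - B l) \<union> (B l - A l)) \<in> sets M" using sigmak_sets[OF D[OF l]] .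
    qed
    ultimately have "measure M (X - Y) \<le> measure M (\<Union>l\<in>{1..L}. (\<sigma> ^^ (l - 1)) -` ((A l - B l) \<union> (B l - A l)))"
      by (intro finite_measure_mono)
    also have "\<dots> \<le> (\<Sum>l\<in>{1..L}. measure M ((\<sigma> ^^ (l - 1)) -` ((A l - B l) \<union> (B l - A l))))"
    proof (rule measure_UNION_le)
      show "finite {1..L}" by simp
      fix l assume l: "l \<in> {1..L}"
      show "(\<sigma> ^^ (l - 1)) -` ((A l - B l) \<union> (B l - A l)) \<in> sets M" using sigmak_sets[OF D[OF l]] .
    qed
    also have "\<dots> = (\<Sum>l\<in>{1..L}. measure M ((A l - B l) \<union> (B l - A l)))"
    proof (rule sum.cong[OF refl])
      fix l assume l: "l \<in> {1..L}"
      show "measure M ((\<sigma> ^^ (l - 1)) -` ((A l - B l) \<union> (B l - A l))) = measure M ((A l - B l) \<union> (B l - A l))"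
        using sigmak_pres[OF D[OF l]] .
    qed
    finally show ?thesis using 1 by simp
  qed
  have "measure M SA - measure M SB \<le> (\<Sum>l\<in>{1..L}. measure M ((A l - B l) \<union> (B l - A l)))"
    by (rule one[OF SA_def SB_def A B]) auto
  moreover have "measure M SB - measure M SA \<le> (\<Sum>l\<in>{1..L}. measure M ((A l - B l) \<union> (B l - A l)))"
    by (rule one[OF SB_def SA_def B A]) auto
  ultimately show ?thesis unfolding SA_def[symmetric] SB_def[symmetric] by linarith
qed

end

locale fin = erg M \<tau> for M :: "'a::polish_space measure" and \<tau> +
  fixes L :: nat and c :: "'a \<Rightarrow> 'i" and I :: "'i set"
  assumes L1: "L \<ge> 1" and finI: "finite I" and cI: "\<And>x. c x \<in> I" and cs: "\<And>i. i \<in> I \<Longrightarrow> c -` {i} \<in> sets M"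
begin

definition tup :: "'a \<Rightarrow> nat \<Rightarrow> 'i" where "tup x = restrict (\<lambda>l. c ((\<sigma> ^^ (l - 1)) x)) {1..L}"
definition T :: "(nat \<Rightarrow> 'i) set" where "T = PiE {1..L} (\<lambda>_. I)"
definition w :: "(nat \<Rightarrow> 'i) \<Rightarrow> real" where "w t = measure M {x. tup x = t}"
definition a :: "'i \<Rightarrow> real" where "a i = measure M (c -` {i})"

lemma finT: "finite T" unfolding T_def using finI by (simp add: finite_PiE)

lemma tupT: "tup x \<in> T" unfolding tup_def T_def using cI by auto

lemma tup_eq: "t \<in> T \<Longrightarrow> tup x = t \<longleftrightarrow> (\<forall>l\<in>{1..L}. c ((\<sigma> ^^ (l - 1)) x) = t l)"
  unfolding tup_def T_def by (auto simp: fun_eq_iff PiE_def extensional_def)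

lemma pre_sets: "{x. tup x = t} \<in> sets M"
proof (cases "t \<in> T")
  case True
  have "{x. tup x = t} = (\<Inter>l\<in>{1..L}. (\<sigma> ^^ (l - 1)) -` (c -` {t l}))" using tup_eq[OF True] by auto
  moreover have "c -` {t l} \<in> sets M" if "l \<in> {1..L}" for l
  proof -
    have "t l \<in> I" using True that by (auto simp: T_def)
    then show ?thesis by (rule cs)
  qed
  ultimately show ?thesis using inter_sets by simp
next
  case False
  then have "{x. tup x = t} = {}" using tupT by auto
  then show ?thesis by simp
qed

lemma tupS:
  assumes "S \<subseteq> T"
  shows "{x. tup x \<in> S} \<in> sets M" "measure M {x. tup x \<in> S} = (\<Sum>t\<in>S. w t)"
proof -
  have fS: "finite S" using assms finT finite_subset by blast
  have eq: "{x. tup x \<in> S} = (\<Union>t\<in>S. {x. tup x = t})" by auto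
  show "{x. tup x \<in> S} \<in> sets M" unfolding eq using fS pre_sets by auto
  have "measure M (\<Union>t\<in>S. {x. tup x = t}) = (\<Sum>t\<in>S. measure M {x. tup x = t})"
    using fS pre_sets by (intro measure_finite_Union) (auto simp: disjoint_family_on_def)
  then show "measure M {x. tup x \<in> S} = (\<Sum>t\<in>S. w t)" unfolding eq w_def by simp
qed

lemma w0: "w t \<ge> 0" unfolding w_def by simp

lemma w1: "sum w T = 1"
proof -
  have "{x. tup x \<in> T} = space M" using tupT space_M by auto
  then show ?thesis using tupS(2)[of T] prob_space by simp
qed

lemma wa: "l \<in> {1..L} \<Longrightarrow> i \<in> I \<Longrightarrow> sum w {t\<in>T. t l = i} = a i"
proof -
  assume l: "l \<in> {1..L}" and i: "i \<in> I"
  have "{x. tup x \<in> {t\<in>T. t l = i}} = (\<sigma> ^^ (l - 1)) -` (c -` {i})"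
    using tupT l by (auto simp: tup_def)
  then show ?thesis using tupS(2)[of "{t\<in>T. t l = i}"] sigmak_pres[OF cs[OF i]] by (simp add: a_def)
qed

lemma a0: "a i \<ge> 0" unfolding a_def by simp

lemma a1: "sum a I = 1"
proof -
  have "(\<Union>i\<in>I. c -` {i}) = space M" using cI space_M by auto
  moreover have "measure M (\<Union>i\<in>I. c -` {i}) = (\<Sum>i\<in>I. measure M (c -` {i}))"
    using finI cs by (intro measure_finite_Union) (auto simp: disjoint_family_on_def)
  ultimately show ?thesis using prob_space by (simp add: a_def)
qed

lemma bad:
  assumes e0: "\<And>k. k \<in> {1..<L} \<Longrightarrow> measure M {y. c ((\<sigma> ^^ k) y) = c y} \<le> \<epsilon>0" and e00: "\<epsilon>0 \<ge> 0"
  shows "sum w {t\<in>T. \<not> inj_on t {1..L}} \<le> real L * real L * \<epsilon>0"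
proof -
  define Pairs where "Pairs = {p \<in> {1..L} \<times> {1..L}. fst p < snd p}"
  define B where "B p = (\<sigma> ^^ (fst p - 1)) -` {y. c ((\<sigma> ^^ (snd p - fst p)) y) = c y}" for p :: "nat \<times> nat"
  have fP: "finite Pairs" by (simp add: Pairs_def)
  have Ys: "{y. c ((\<sigma> ^^ k) y) = c y} \<in> sets M" for k
    using finI cI cs by (intro same_cell_sets[OF _ _ _ sigmak_meas space_M]) auto
  have Bs: "B p \<in> sets M" for p unfolding B_def by (rule sigmak_sets[OF Ys])
  have sub: "{x. tup x \<in> {t\<in>T. \<not> inj_on t {1..L}}} \<subseteq> (\<Union>p\<in>Pairs. B p)"
  proof
    fix x assume "x \<in> {x. tup x \<in> {t\<in>T. \<not> inj_on t {1..L}}}"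
    then obtain l l' where ll: "l \<in> {1..L}" "l' \<in> {1..L}" "l \<noteq> l'" "tup x l = tup x l'"
      unfolding inj_on_def by auto
    have key: "c ((\<sigma> ^^ (j - 1)) x) = c ((\<sigma> ^^ (j' - 1)) x) \<Longrightarrow> j \<in> {1..L} \<Longrightarrow> j' \<in> {1..L} \<Longrightarrow> j < j' \<Longrightarrow> x \<in> (\<Union>p\<in>Pairs. B p)" for j j'
    proof -
      assume h: "c ((\<sigma> ^^ (j - 1)) x) = c ((\<sigma> ^^ (j' - 1)) x)" and j: "j \<in> {1..L}" "j' \<in> {1..L}" "j < j'"
      have "(\<sigma> ^^ (j' - 1)) x = (\<sigma> ^^ (j' - j)) ((\<sigma> ^^ (j - 1)) x)"
      proof -
        have "j' - 1 = (j' - j) + (j - 1)" using j by auto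
        then show ?thesis by (metis comp_apply funpow_add)
      qed
      then have "x \<in> B (j, j')" using h by (simp add: B_def)
      moreover have "(j, j') \<in> Pairs" using j by (simp add: Pairs_def)
      ultimately show ?thesis by blast
    qed
    have "c ((\<sigma> ^^ (l - 1)) x) = c ((\<sigma> ^^ (l' - 1)) x)" using ll by (simp add: tup_def)
    then show "x \<in> (\<Union>p\<in>Pairs. B p)"
      using key[of l l'] key[of l' l] ll by (cases "l < l'") auto
  qed
  have "sum w {t\<in>T. \<not> inj_on t {1..L}} = measure M {x. tup x \<in> {t\<in>T. \<not> inj_on t {1..L}}}"
    using tupS(2)[of "{t\<in>T. \<not> inj_on t {1..L}}"] by simp
  also have "\<dots> \<le> measure M (\<Union>p\<in>Pairs. B p)"
    using sub Bs fP by (intro finite_measure_mono) auto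
  also have "\<dots> \<le> (\<Sum>p\<in>Pairs. measure M (B p))" using Bs fP by (intro measure_UNION_le) auto
  also have "\<dots> \<le> (\<Sum>p\<in>Pairs. \<epsilon>0)"
  proof (rule sum_mono)
    fix p assume p: "p \<in> Pairs"
    have "measure M (B p) = measure M {y. c ((\<sigma> ^^ (snd p - fst p)) y) = c y}"
      unfolding B_def by (rule sigmak_pres[OF Ys])
    also have "\<dots> \<le> \<epsilon>0" using p by (intro e0) (auto simp: Pairs_def)
    finally show "measure M (B p) \<le> \<epsilon>0" .
  qed
  also have "\<dots> = real (card Pairs) * \<epsilon>0" by simp
  also have "\<dots> \<le> real L * real L * \<epsilon>0"
  proof (rule mult_right_mono)
    have "card Pairs \<le> card ({1..L} \<times> {1..L})" by (rule card_mono) (auto simp: Pairs_def)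
    then have "card Pairs \<le> L * L" by (simp add: card_cartesian_product)
    then have "real (card Pairs) \<le> real (L * L)" by (simp only: of_nat_le_iff)
    then show "real (card Pairs) \<le> real L * real L" by simp
    show "0 \<le> \<epsilon>0" by (rule e00)
  qed
  finally show ?thesis .
qed

lemma XXmeas:
  "measure M {x. \<forall>l\<in>{1..L}. z (c ((\<sigma> ^^ (l - 1)) x)) \<in> Q l} = XX T w Q L z"
proof -
  define S where "S = {t\<in>T. \<forall>l\<in>{1..L}. z (t l) \<in> Q l}"
  have "{x. \<forall>l\<in>{1..L}. z (c ((\<sigma> ^^ (l - 1)) x)) \<in> Q l} = {x. tup x \<in> S}"
    using tupT by (auto simp: S_def tup_def)
  then have "measure M {x. \<forall>l\<in>{1..L}. z (c ((\<sigma> ^^ (l - 1)) x)) \<in> Q l} = (\<Sum>t\<in>S. w t)"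
    using tupS(2)[of S] by (simp add: S_def)
  also have "\<dots> = (\<Sum>t\<in>T. if \<forall>l\<in>{1..L}. z (t l) \<in> Q l then w t else 0)"
    unfolding S_def using finT by (rule sum.inter_filter)
  also have "\<dots> = XX T w Q L z"
    unfolding XX_def Phi_def by (intro sum.cong) (auto simp: prod_of_bool)
  finally show ?thesis .
qed

lemma XXsets: "{x. \<forall>l\<in>{1..L}. z (c ((\<sigma> ^^ (l - 1)) x)) \<in> Q l} \<in> sets M"
proof -
  define S where "S = {t\<in>T. \<forall>l\<in>{1..L}. z (t l) \<in> Q l}"
  have "{x. \<forall>l\<in>{1..L}. z (c ((\<sigma> ^^ (l - 1)) x)) \<in> Q l} = {x. tup x \<in> S}"
    using tupT by (auto simp: S_def tup_def)
  then show ?thesis using tupS(1)[of S] by (simp add: S_def)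
qed

end


context erg
begin

lemma main_erg:
  fixes L :: nat and \<gamma> :: "nat \<Rightarrow> real" and \<eta> :: real
  assumes L1: "L \<ge> 1" and g0: "0 < \<gamma> L" and gdec: "\<forall>l\<in>{1..<L}. \<gamma> (l+1) < \<gamma> l" and g1: "\<gamma> 1 < 1"
    and eta: "\<eta> > 0"
  shows "\<exists>U :: nat \<Rightarrow> 'a set.
           (\<forall>l\<in>{1..L}. U l \<in> sets M \<and> measure M (U l) = \<gamma> l) \<and>
           (\<forall>l\<in>{1..<L}. U (l+1) \<subseteq> U l) \<and>
           (\<forall>e :: nat \<Rightarrow> bool.
              \<bar>measure M (\<Inter>l\<in>{1..L}. (\<tau> ^^ (l-1)) ` set_power M (U l) (e l))
               - (\<Prod>l=1..L. measure M (set_power M (U l) (e l)))\<bar> \<le> \<eta>)"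
proof -
  have gb: "\<And>l. l \<in> {1..L} \<Longrightarrow> 0 < \<gamma> l \<and> \<gamma> l < 1" by (rule gamma_facts[OF L1 g0 gdec g1])
  define p where "p = (\<lambda>v::nat. if v = 0 then 1 - \<gamma> 1 else if v < L then \<gamma> v - \<gamma> (Suc v) else if v = L then \<gamma> L else 0)"
  note pf = p_facts[OF L1 g0 gdec g1 p_def]
  have p0: "\<And>v. p v \<ge> 0" by (rule pf(1))
  have p1: "(\<Sum>v\<in>{0..L}. p v) = 1" by (rule pf(2))
  define E where "E = PiE {1..L} (\<lambda>_. UNIV :: bool set)"
  have finE: "finite E" by (simp add: E_def finite_PiE)
  define K where "K = real (card E) + real L"
  define d where "d = \<eta> / (1 + real L * 2 ^ L)"
  define \<epsilon> where "\<epsilon> = d\<^sup>2 / (K * (2 + real L ^ 2))"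
  have Kpos: "K > 0" using L1 by (simp add: K_def add_nonneg_pos)
  have dpos: "d > 0" using eta by (simp add: d_def add_pos_nonneg)
  have epos: "\<epsilon> > 0" using dpos Kpos by (simp add: \<epsilon>_def add_pos_nonneg)
  have Kb: "K * (2 * \<epsilon> + real L ^ 2 * \<epsilon>) = d\<^sup>2"
  proof -
    have "2 + real L ^ 2 > 0" by (simp add: add_pos_nonneg)
    then have nz: "K * (2 + real L ^ 2) \<noteq> 0" using Kpos by simp
    have "K * (2 * \<epsilon> + real L ^ 2 * \<epsilon>) = (K * (2 + real L ^ 2)) * \<epsilon>" by (simp add: algebra_simps)
    also have "\<dots> = d\<^sup>2" unfolding \<epsilon>_def using nz by simp
    finally show ?thesis .
  qed
  define \<epsilon>0 where "\<epsilon>0 = \<epsilon> / (real L * real L)"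
  have e0pos: "\<epsilon>0 > 0" using epos L1 by (simp add: \<epsilon>0_def)
  have LLe0: "real L * real L * \<epsilon>0 = \<epsilon>" using L1 by (simp add: \<epsilon>0_def)
  obtain c :: "'a \<Rightarrow> nat set \<times> nat" and I where part: "finite I" "\<forall>x. c x \<in> I"
     "\<forall>i\<in>I. c -` {i} \<in> sets M \<and> measure M (c -` {i}) \<le> \<epsilon>"
     "\<forall>k\<in>{1..<L}. measure M {x. c ((\<sigma> ^^ k) x) = c x} \<le> \<epsilon>0"
    using partition_exists[OF epos e0pos, of L] by blast
  interpret F: fin M \<tau> L c I
    using L1 part by unfold_locales auto
  have Fbad: "sum F.w {t\<in>F.T. \<not> inj_on t {1..L}} \<le> \<epsilon>"
    using F.bad[of \<epsilon>0] part(4) e0pos LLe0 by auto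
  have vb: "EE I L p (\<lambda>z. (XX F.T F.w Q L z - qQ p L Q)\<^sup>2) \<le> 2 * \<epsilon> + real L ^ 2 * \<epsilon>" for Q
  proof (rule var_bound[OF part(1) p1 p0 F.T_def F.w0 F.w1])
    show "\<And>l i. l \<in> {1..L} \<Longrightarrow> i \<in> I \<Longrightarrow> sum F.w {t \<in> F.T. t l = i} = F.a i" by (rule F.wa)
    show "\<And>i. 0 \<le> F.a i" by (rule F.a0)
    show "sum F.a I = 1" by (rule F.a1)
    show "\<And>i. i \<in> I \<Longrightarrow> F.a i \<le> \<epsilon>" using part(3) by (simp add: F.a_def)
    show "sum F.w {t \<in> F.T. \<not> inj_on t {1..L}} \<le> \<epsilon>" by (rule Fbad)
  qed
  define Qe where "Qe e l = {v. (l \<le> v) = e l}" for e :: "nat \<Rightarrow> bool" and l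
  define QY where "QY l l' = (if l' = l then {v. l \<le> v} else UNIV)" for l l' :: nat
  have qe: "qQ p L (Qe e) = (\<Prod>l\<in>{1..L}. if e l then \<gamma> l else 1 - \<gamma> l)" for e
    unfolding qQ_def
  proof (rule prod.cong[OF refl])
    fix l assume l: "l \<in> {1..L}"
    show "(\<Sum>v\<in>{0..L}. p v * of_bool (v \<in> Qe e l)) = (if e l then \<gamma> l else 1 - \<gamma> l)"
      using pf(3)[OF l] pf(4)[OF l] by (cases "e l") (simp_all add: Qe_def)
  qed
  have qy: "qQ p L (QY l) = \<gamma> l" if l: "l \<in> {1..L}" for l
  proof -
    have "qQ p L (QY l) = (\<Prod>l'\<in>{1..L}. if l' = l then \<gamma> l else 1)"
      unfolding qQ_def
    proof (rule prod.cong[OF refl])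
      fix l' assume l': "l' \<in> {1..L}"
      show "(\<Sum>v\<in>{0..L}. p v * of_bool (v \<in> QY l l')) = (if l' = l then \<gamma> l else 1)"
        using pf(3)[OF l] p1 by (simp add: QY_def)
    qed
    then show ?thesis using l by simp
  qed
  define Fz where "Fz z = (\<Sum>e\<in>E. (XX F.T F.w (Qe e) L z - qQ p L (Qe e))\<^sup>2)
      + (\<Sum>l\<in>{1..L}. (XX F.T F.w (QY l) L z - qQ p L (QY l))\<^sup>2)" for z
  have EFz: "EE I L p Fz \<le> d\<^sup>2"
  proof -
    have "EE I L p Fz = 1 * EE I L p (\<lambda>z. \<Sum>e\<in>E. (XX F.T F.w (Qe e) L z - qQ p L (Qe e))\<^sup>2)
       + 1 * EE I L p (\<lambda>z. \<Sum>l\<in>{1..L}. (XX F.T F.w (QY l) L z - qQ p L (QY l))\<^sup>2)"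
      unfolding Fz_def using EE_lin[of I L p 1 _ 1] by simp
    also have "\<dots> = (\<Sum>e\<in>E. EE I L p (\<lambda>z. (XX F.T F.w (Qe e) L z - qQ p L (Qe e))\<^sup>2))
       + (\<Sum>l\<in>{1..L}. EE I L p (\<lambda>z. (XX F.T F.w (QY l) L z - qQ p L (QY l))\<^sup>2))"
      using finE by (simp add: EE_sum)
    also have "\<dots> \<le> (\<Sum>e\<in>E. 2 * \<epsilon> + real L ^ 2 * \<epsilon>) + (\<Sum>l\<in>{1..L}. 2 * \<epsilon> + real L ^ 2 * \<epsilon>)"
      by (intro add_mono sum_mono vb)
    also have "\<dots> = K * (2 * \<epsilon> + real L ^ 2 * \<epsilon>)" by (simp add: K_def algebra_simps)
    finally show ?thesis using Kb by simp
  qed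
  obtain z where z: "z \<in> PiE I (\<lambda>_. {0..L})" "Fz z \<le> EE I L p Fz"
    using EE_exists[OF part(1) p1 p0, of Fz] by blast
  have Fzd: "Fz z \<le> d\<^sup>2" using z(2) EFz by simp
  have dev_e: "\<bar>XX F.T F.w (Qe e) L z - qQ p L (Qe e)\<bar> \<le> d" if e: "e \<in> E" for e
  proof -
    have "(XX F.T F.w (Qe e) L z - qQ p L (Qe e))\<^sup>2 \<le> (\<Sum>e\<in>E. (XX F.T F.w (Qe e) L z - qQ p L (Qe e))\<^sup>2)"
      using finE e by (intro member_le_sum) auto
    also have "\<dots> \<le> Fz z" unfolding Fz_def by (simp add: sum_nonneg)
    finally have "(XX F.T F.w (Qe e) L z - qQ p L (Qe e))\<^sup>2 \<le> d\<^sup>2" using Fzd by simp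
    then show ?thesis using dpos by (simp add: power2_le_iff_abs_le)
  qed
  have dev_l: "\<bar>XX F.T F.w (QY l) L z - qQ p L (QY l)\<bar> \<le> d" if l: "l \<in> {1..L}" for l
  proof -
    have "(XX F.T F.w (QY l) L z - qQ p L (QY l))\<^sup>2 \<le> (\<Sum>l\<in>{1..L}. (XX F.T F.w (QY l) L z - qQ p L (QY l))\<^sup>2)"
      using l by (intro member_le_sum) auto
    also have "\<dots> \<le> Fz z" unfolding Fz_def by (simp add: sum_nonneg)
    finally have "(XX F.T F.w (QY l) L z - qQ p L (QY l))\<^sup>2 \<le> d\<^sup>2" using Fzd by simp
    then show ?thesis using dpos by (simp add: power2_le_iff_abs_le)
  qed
  define U where "U l = {x. l \<le> z (c x)}" for l
  have Us: "U l \<in> sets M" for l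
  proof -
    have "U l = (\<Union>i\<in>{i\<in>I. l \<le> z i}. c -` {i})" using part(2) by (auto simp: U_def)
    then show ?thesis using part(1,3) by auto
  qed
  have U0: "U 0 = UNIV" by (simp add: U_def)
  have Unest: "U (Suc l) \<subseteq> U l" for l by (auto simp: U_def)
  have mU: "\<bar>measure M (U l) - \<gamma> l\<bar> \<le> d" if l: "l \<in> {1..L}" for l
  proof -
    have "{x. \<forall>l'\<in>{1..L}. z (c ((\<sigma> ^^ (l' - 1)) x)) \<in> QY l l'} = (\<sigma> ^^ (l - 1)) -` U l"
      using l by (auto simp: QY_def U_def)
    then have "XX F.T F.w (QY l) L z = measure M (U l)"
      using F.XXmeas[of z "QY l"] sigmak_pres[OF Us] by simp
    then show ?thesis using dev_l[OF l] qy[OF l] by simp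
  qed
  define step where "step l V = (SOME V'. V' \<in> sets M \<and> V' \<subseteq> V \<and> measure M V' = \<gamma> (Suc l) \<and>
     measure M ((V' - U (Suc l)) \<union> (U (Suc l) - V')) \<le> 2 * measure M (U (Suc l) - V) + \<bar>measure M (U (Suc l)) - \<gamma> (Suc l)\<bar>)" for l V
  define Vs where "Vs = rec_nat UNIV step"
  have Vs0: "Vs 0 = UNIV" by (simp add: Vs_def)
  have VsS: "Vs (Suc l) = step l (Vs l)" for l by (simp add: Vs_def)
  have stepP: "Vs (Suc l) \<in> sets M \<and> Vs (Suc l) \<subseteq> Vs l \<and> measure M (Vs (Suc l)) = \<gamma> (Suc l) \<and>
     measure M ((Vs (Suc l) - U (Suc l)) \<union> (U (Suc l) - Vs (Suc l))) \<le> 2 * measure M (U (Suc l) - Vs l) + \<bar>measure M (U (Suc l)) - \<gamma> (Suc l)\<bar>"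
    if l: "l < L" and Vl: "Vs l \<in> sets M" "measure M (Vs l) = (if l = 0 then 1 else \<gamma> l)" for l
  proof -
    have ge: "0 \<le> \<gamma> (Suc l)" using gb[of "Suc l"] l by auto
    have lt: "\<gamma> (Suc l) < measure M (Vs l)"
    proof (cases "l = 0")
      case True then show ?thesis using g1 Vl by simp
    next
      case False
      then have "l \<in> {1..<L}" using l by auto
      then show ?thesis using gdec Vl False by auto
    qed
    show ?thesis unfolding VsS step_def
      by (rule someI_ex) (use adjust_step[OF Vl(1) Us ge lt] in blast)
  qed
  have inv: "l \<le> L \<longrightarrow> Vs l \<in> sets M \<and> measure M (Vs l) = (if l = 0 then 1 else \<gamma> l) \<and>
      measure M ((Vs l - U l) \<union> (U l - Vs l)) \<le> (2 ^ l - 1) * d" for l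
  proof (induction l)
    case 0
    have "UNIV \<in> sets M" using sets.top[of M] space_M by simp
    then show ?case using U0 Vs0 prob_space space_M by simp
  next
    case (Suc l)
    show ?case
    proof
      assume l: "Suc l \<le> L"
      then have IH: "Vs l \<in> sets M" "measure M (Vs l) = (if l = 0 then 1 else \<gamma> l)"
         "measure M ((Vs l - U l) \<union> (U l - Vs l)) \<le> (2 ^ l - 1) * d" using Suc by auto
      note S = stepP[OF _ IH(1,2)] 
      have S': "Vs (Suc l) \<in> sets M" "measure M (Vs (Suc l)) = \<gamma> (Suc l)"
        "measure M ((Vs (Suc l) - U (Suc l)) \<union> (U (Suc l) - Vs (Suc l))) \<le> 2 * measure M (U (Suc l) - Vs l) + \<bar>measure M (U (Suc l)) - \<gamma> (Suc l)\<bar>"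
        using S l by auto
      have "measure M (U (Suc l) - Vs l) \<le> measure M ((Vs l - U l) \<union> (U l - Vs l))"
        using Unest[of l] Us IH(1) by (intro finite_measure_mono) auto
      moreover have "\<bar>measure M (U (Suc l)) - \<gamma> (Suc l)\<bar> \<le> d" using mU[of "Suc l"] l by auto
      ultimately have "measure M ((Vs (Suc l) - U (Suc l)) \<union> (U (Suc l) - Vs (Suc l))) \<le> 2 * ((2 ^ l - 1) * d) + d"
        using S'(3) IH(3) by linarith
      also have "\<dots> = (2 ^ Suc l - 1) * d" by (simp add: algebra_simps)
      finally show "Vs (Suc l) \<in> sets M \<and> measure M (Vs (Suc l)) = (if Suc l = 0 then 1 else \<gamma> (Suc l)) \<and>
        measure M ((Vs (Suc l) - U (Suc l)) \<union> (U (Suc l) - Vs (Suc l))) \<le> (2 ^ Suc l - 1) * d"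
        using S' by simp
    qed
  qed
  have Vsub: "Vs (Suc l) \<subseteq> Vs l" if "l < L" for l
    using stepP[of l] inv[of l] that by auto
  define SP where "SP V b = (if b then V else UNIV - V)" for V :: "'a set" and b
  have SPs: "SP V b \<in> sets M" if "V \<in> sets M" for V b
    using that sets.compl_sets[of V M] space_M by (auto simp: SP_def Compl_eq_Diff_UNIV)
  have SPd: "(SP V b - SP U' b) \<union> (SP U' b - SP V b) = (V - U') \<union> (U' - V)" for V U' b
    by (auto simp: SP_def)
  show ?thesis
  proof (intro exI[of _ Vs] conjI ballI allI)
    fix l assume l: "l \<in> {1..L}"
    show "Vs l \<in> sets M" using inv[of l] l by auto
    show "measure M (Vs l) = \<gamma> l" using inv[of l] l by auto
  next
    fix l assume l: "l \<in> {1..<L}"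
    show "Vs (l + 1) \<subseteq> Vs l" using Vsub[of l] l by auto
  next
    fix e :: "nat \<Rightarrow> bool"
    define e' where "e' = restrict e {1..L}"
    have e'E: "e' \<in> E" by (simp add: e'_def E_def)
    have sp: "set_power M V b = SP V b" for V b by (simp add: set_power_def SP_def space_M)
    have Vsl: "Vs l \<in> sets M" if "l \<in> {1..L}" for l using inv[of l] that by auto
    have lhs: "(\<Inter>l\<in>{1..L}. (\<tau> ^^ (l-1)) ` set_power M (Vs l) (e l)) = (\<Inter>l\<in>{1..L}. (\<sigma> ^^ (l-1)) -` SP (Vs l) (e l))"
      by (simp add: sp image_tauk)
    have rhs: "(\<Prod>l=1..L. measure M (set_power M (Vs l) (e l))) = qQ p L (Qe e)"
    proof -
      have "(\<Prod>l=1..L. measure M (set_power M (Vs l) (e l))) = (\<Prod>l\<in>{1..L}. if e l then \<gamma> l else 1 - \<gamma> l)"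
      proof (rule prod.cong[OF refl])
        fix l assume l: "l \<in> {1..L}"
        have m: "measure M (Vs l) = \<gamma> l" using inv[of l] l by auto
        have "measure M (UNIV - Vs l) = 1 - measure M (Vs l)" using prob_compl[OF Vsl[OF l]] space_M by simp
        then show "measure M (set_power M (Vs l) (e l)) = (if e l then \<gamma> l else 1 - \<gamma> l)"
          using m by (simp add: sp SP_def)
      qed
      then show ?thesis using qe by simp
    qed
    have qee: "qQ p L (Qe e') = qQ p L (Qe e)"
      unfolding qe by (intro prod.cong) (auto simp: e'_def)
    have XU: "measure M (\<Inter>l\<in>{1..L}. (\<sigma> ^^ (l-1)) -` SP (U l) (e l)) = XX F.T F.w (Qe e') L z"
    proof -
      have "(\<Inter>l\<in>{1..L}. (\<sigma> ^^ (l-1)) -` SP (U l) (e l)) = {x. \<forall>l\<in>{1..L}. z (c ((\<sigma> ^^ (l - 1)) x)) \<in> Qe e' l}"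
      proof -
        have mem: "y \<in> SP (U l) b \<longleftrightarrow> (l \<le> z (c y)) = b" for y l b by (cases b) (auto simp: SP_def U_def)
        have "x \<in> (\<Inter>l\<in>{1..L}. (\<sigma> ^^ (l-1)) -` SP (U l) (e l)) \<longleftrightarrow> x \<in> {x. \<forall>l\<in>{1..L}. z (c ((\<sigma> ^^ (l - 1)) x)) \<in> Qe e' l}" for x
          by (simp add: mem Qe_def e'_def)
        then show ?thesis by blast
      qed
      then show ?thesis using F.XXmeas by simp
    qed
    have pert: "\<bar>measure M (\<Inter>l\<in>{1..L}. (\<sigma> ^^ (l-1)) -` SP (Vs l) (e l)) - measure M (\<Inter>l\<in>{1..L}. (\<sigma> ^^ (l-1)) -` SP (U l) (e l))\<bar>
        \<le> (\<Sum>l\<in>{1..L}. measure M ((SP (Vs l) (e l) - SP (U l) (e l)) \<union> (SP (U l) (e l) - SP (Vs l) (e l))))"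
    proof (rule perturb)
      fix l :: nat assume l: "l \<in> {1..L}"
      show "SP (Vs l) (e l) \<in> sets M" by (rule SPs[OF Vsl[OF l]])
      show "SP (U l) (e l) \<in> sets M" by (rule SPs[OF Us])
    qed
    also have "\<dots> \<le> (\<Sum>l\<in>{1..L}. 2 ^ L * d)"
    proof (rule sum_mono)
      fix l assume l: "l \<in> {1..L}"
      have "measure M ((Vs l - U l) \<union> (U l - Vs l)) \<le> (2 ^ l - 1) * d" using inv[of l] l by auto
      also have "\<dots> \<le> 2 ^ L * d"
      proof -
        have "(2::real) ^ l \<le> 2 ^ L" using l by (intro power_increasing) auto
        then have "(2::real) ^ l - 1 \<le> 2 ^ L" by linarith
        then show ?thesis using dpos by (intro mult_right_mono) auto
      qed
      finally show "measure M ((SP (Vs l) (e l) - SP (U l) (e l)) \<union> (SP (U l) (e l) - SP (Vs l) (e l))) \<le> 2 ^ L * d"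
        by (simp only: SPd)
    qed
    also have "\<dots> = real L * 2 ^ L * d" by simp
    finally have pb: "\<bar>measure M (\<Inter>l\<in>{1..L}. (\<sigma> ^^ (l-1)) -` SP (Vs l) (e l)) - XX F.T F.w (Qe e') L z\<bar> \<le> real L * 2 ^ L * d"
      using XU by simp
    have db: "\<bar>XX F.T F.w (Qe e') L z - qQ p L (Qe e)\<bar> \<le> d" using dev_e[OF e'E] qee by simp
    have "(1 + real L * 2 ^ L) > 0" by (simp add: add_pos_nonneg)
    then have "(1 + real L * 2 ^ L) * d = \<eta>" unfolding d_def by simp
    then have "real L * 2 ^ L * d + d = \<eta>" by (simp add: algebra_simps)
    then show "\<bar>measure M (\<Inter>l\<in>{1..L}. (\<tau> ^^ (l-1)) ` set_power M (Vs l) (e l))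
               - (\<Prod>l=1..L. measure M (set_power M (Vs l) (e l)))\<bar> \<le> \<eta>"
      unfolding lhs rhs using pb db by linarith
  qed
qed

end

theorem mainTheorem10:
  fixes M :: "'a::polish_space measure" and \<tau> :: "'a \<Rightarrow> 'a"
    and L :: nat and \<gamma> :: "nat \<Rightarrow> real" and \<eta> :: real
  assumes "standard_prob_space M" and "non_atomic M"
    and "invertible_mp_map M \<tau>" and "ergodic_map M \<tau>"
    and "L \<ge> 1"
    and "0 < \<gamma> L" and "\<forall>l\<in>{1..<L}. \<gamma> (l+1) < \<gamma> l" and "\<gamma> 1 < 1"
    and "\<eta> > 0"
  shows "\<exists>U :: nat \<Rightarrow> 'a set.
           (\<forall>l\<in>{1..L}. U l \<in> sets M \<and> measure M (U l) = \<gamma> l) \<and>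
           (\<forall>l\<in>{1..<L}. U (l+1) \<subseteq> U l) \<and>
           (\<forall>e :: nat \<Rightarrow> bool.
              \<bar>measure M (\<Inter>l\<in>{1..L}. (\<tau> ^^ (l-1)) ` set_power M (U l) (e l))
               - (\<Prod>l=1..L. measure M (set_power M (U l) (e l)))\<bar> \<le> \<eta>)"
proof -
  have pm: "prob_space M" and sM: "sets M = sets borel"
    using assms(1) unfolding standard_prob_space_def by auto
  interpret erg M \<tau>
  proof -
    show "erg M \<tau>"
      unfolding erg_def erg_axioms_def na_space_def na_space_axioms_def
      using pm sM assms(2,3,4) by auto
  qed
  show ?thesis by (rule main_erg[OF assms(5,6,7,8,9)])
qed

end
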